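(* Let $T>0$ and $N\in\mathbb{N}$. Under the assumptions of the context, the killed interacting particle system $$\xi^i_t=\xi^i_0+\int_0^t b\big(u_N(\cdot,\xi^i_s)(s),\ \nabla u_N(\cdot,\xi^i_s)(s)\big)ds+\sqrt2\,W^i_t,\quad t\in[0,\tau^i)\cap[0,T];\qquad \xi^i_t=\Delta,\ t\ge\tau^i,$$ $i=1,\dots,N$, with $$\tau^i:=\inf\Big\{t\ge0:\int_0^t\lambda c_0\exp\big(-\lambda u_N(\cdot,\xi^i_s)(s)\big)ds\ge Z_i\Big\},$$ admits a pathwise unique strong solution $\xi_t=(\xi^1_t,\dots,\xi^N_t)$, $t\in[0,T]$.
   Context: On a filtered probability space, let $W^1,\dots,W^N$ be independent one-dimensional Brownian motions, $\xi^i_0=X^i_0$ i.i.d. $\mathcal F_0$-measurable real random variables with law $\rho_0(x)dx$, $\rho_0\in L^2(\mathbb{R})\cap C_b(\mathbb{R})$, finite second moment, independent of all $W^j$; and $Z_1,\dots,Z_N$ i.i.d. $\mathrm{Exp}(1)$ random variables independent of the Brownian motions and initial conditions. $\Delta$ is a cemetery state isolated from $\mathbb{R}$, with the convention $f(\Delta)=0$ for functions on $\mathbb{R}$, and $\xi^i_{\tau^i}:=\lim_{t\to\tau^{i-}}\xi^i_t$. The empirical measure of alive particles is $\mu^N_t:=\frac1N\sum_{i=1}^N\delta_{\xi^i_t}\mathbf 1_{\{t<\tau^i\}}$, $u_N(t,x):=\int_{\mathbb{R}}K(x-y)\mu^N_t(dy)$, and $u_N(\cdot,x)(t):=\int_0^t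 u_N(s,x)\,ds$, $\nabla u_N(\cdot,x)(t):=\int_0^t\int_{\mathbb{R}}\nabla K(x-y)\mu^N_s(dy)\,ds$. $K:\mathbb{R}\to\mathbb{R}_+$ is a smooth mollifier: $K\in C^\infty$; $|K|\le M_K$, $|\nabla K|\le M_K'$, $|\nabla^2K|\le M_K''$; $K$ and $\nabla K$ are Lipschitz with constants $L_K,L_K'$; $\int K=1$. Parameters $\lambda>0$, $c_0>0$, $\varphi_0>0$, $\varphi_1\in\mathbb{R}$ are such that there exist constants $0<m\le M$ with $m\le\varphi_0+\varphi_1c_0e^{-\lambda x}\le M$ for all $x\in[0,M_KT]$. The drift is $b(x,y):=-\varphi_1\lambda c_0\dfrac{e^{-\lambda x}y}{\varphi_0+\varphi_1c_0e^{-\lambda x}}$. *)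

theory Defs
  imports "HOL-Probability.Probability"
begin

text \<open>Particle states live in \<open>real option\<close>: \<open>Some x\<close> is the position \<open>x \<in> \<real>\<close>,
  \<open>None\<close> is the cemetery state Delta.  Particles are indexed by \<open>0..N-1\<close>.\<close>

definition ext0 :: "(real \<Rightarrow> real) \<Rightarrow> real option \<Rightarrow> real" where
  "ext0 f p = (case p of None \<Rightarrow> 0 | Some x \<Rightarrow> f x)"

definition uN :: "nat \<Rightarrow> (real \<Rightarrow> real) \<Rightarrow> (nat \<Rightarrow> real \<Rightarrow> real option) \<Rightarrow> real \<Rightarrow> real \<Rightarrow> real" where
  "uN N K \<xi> t x = (1 / real N) * (\<Sum>j<N. ext0 (\<lambda>y. K (x - y)) (\<xi> j t))"

text \<open>\<open>u_N(\<cdot>,x)(t) = \<integral>_0^t u_N(s,x) ds\<close>.\<close>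
definition intuN :: "nat \<Rightarrow> (real \<Rightarrow> real) \<Rightarrow> (nat \<Rightarrow> real \<Rightarrow> real option) \<Rightarrow> real \<Rightarrow> real \<Rightarrow> real" where
  "intuN N K \<xi> t x = set_lebesgue_integral lborel {0..t} (\<lambda>s. uN N K \<xi> s x)"

text \<open>\<open>\<nabla>u_N(\<cdot>,x)(t) = \<integral>_0^t \<integral> \<nabla>K(x-y) \<mu>^N_s(dy) ds\<close>.\<close>
definition gradUN :: "nat \<Rightarrow> (real \<Rightarrow> real) \<Rightarrow> (nat \<Rightarrow> real \<Rightarrow> real option) \<Rightarrow> real \<Rightarrow> real \<Rightarrow> real" where
  "gradUN N dK \<xi> t x = set_lebesgue_integral lborel {0..t} (\<lambda>s. uN N dK \<xi> s x)"

definition drift_b :: "real \<Rightarrow> real \<Rightarrow> real \<Rightarrow> real \<Rightarrow> real \<Rightarrow> real \<Rightarrow> real" where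
  "drift_b lam c0 phi0 phi1 x y =
     - phi1 * lam * c0 * (exp (- lam * x) * y) / (phi0 + phi1 * c0 * exp (- lam * x))"

text \<open>Killing time \<open>\<tau>^i\<close> (extended real; \<open>Inf {} = \<infinity>\<close>).  Only times in \<open>[0,T]\<close> are
  considered, since the system is posed on \<open>[0,T]\<close>; \<open>\<tau>^i\<close> agrees with the paper's
  stopping time whenever the latter is \<open>\<le> T\<close>, and is \<open>\<infinity>\<close> otherwise.\<close>
definition kill_time :: "real \<Rightarrow> nat \<Rightarrow> (real \<Rightarrow> real) \<Rightarrow> real \<Rightarrow> real \<Rightarrow> real
    \<Rightarrow> (nat \<Rightarrow> real \<Rightarrow> real option) \<Rightarrow> nat \<Rightarrow> ereal" where
  "kill_time T N K lam c0 Zi \<xi> i =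
     Inf {ereal t | t. 0 \<le> t \<and> t \<le> T \<and>
        Zi \<le> set_lebesgue_integral lborel {0..t} (\<lambda>s. lam * c0 * exp (- lam * ext0 (intuN N K \<xi> s) (\<xi> i s)))}"

definition is_killed_solution ::
  "real \<Rightarrow> nat \<Rightarrow> (real \<Rightarrow> real) \<Rightarrow> (real \<Rightarrow> real) \<Rightarrow> real \<Rightarrow> real \<Rightarrow> real \<Rightarrow> real
   \<Rightarrow> (nat \<Rightarrow> real) \<Rightarrow> (nat \<Rightarrow> real \<Rightarrow> real) \<Rightarrow> (nat \<Rightarrow> real)
   \<Rightarrow> (nat \<Rightarrow> real \<Rightarrow> real option) \<Rightarrow> bool" where
  "is_killed_solution T N K dK lam c0 phi0 phi1 x0 W Z \<xi> \<longleftrightarrow>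
     (\<forall>i<N.
        continuous_on {t. 0 \<le> t \<and> t \<le> T \<and> ereal t < kill_time T N K lam c0 (Z i) \<xi> i}
          (\<lambda>t. the (\<xi> i t)) \<and>
        (\<forall>t. 0 \<le> t \<and> t \<le> T \<longrightarrow>
           (ereal t < kill_time T N K lam c0 (Z i) \<xi> i \<longrightarrow>
              \<xi> i t = Some (x0 i
                 + set_lebesgue_integral lborel {0..t} (\<lambda>s.
                      drift_b lam c0 phi0 phi1 (intuN N K \<xi> s (the (\<xi> i s)))
                                               (gradUN N dK \<xi> s (the (\<xi> i s))))
                 + sqrt 2 * W i t)) \<and>
           (kill_time T N K lam c0 (Z i) \<xi> i \<le> ereal t \<longrightarrow> \<xi> i t = None)))"

text \<open>Measurability of a \<open>\<real> \<union> {\<Delta>}\<close>-valued random variable, \<open>\<Delta>\<close> isolated.\<close>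
definition meas_opt :: "'a measure \<Rightarrow> ('a \<Rightarrow> real option) \<Rightarrow> bool" where
  "meas_opt G X \<longleftrightarrow> {\<omega> \<in> space G. X \<omega> = None} \<in> sets G \<and>
     (\<forall>B \<in> sets borel. {\<omega> \<in> space G. X \<omega> \<in> Some ` B} \<in> sets G)"

definition brownian_motion :: "'a measure \<Rightarrow> (real \<Rightarrow> 'a measure) \<Rightarrow> (real \<Rightarrow> 'a \<Rightarrow> real) \<Rightarrow> bool" where
  "brownian_motion M F W \<longleftrightarrow>
     (\<forall>\<omega>\<in>space M. W 0 \<omega> = 0 \<and> continuous_on {0..} (\<lambda>t. W t \<omega>)) \<and>
     (\<forall>t\<ge>0. W t \<in> borel_measurable (F t)) \<and>
     (\<forall>s t. 0 \<le> s \<and> s < t \<longrightarrow>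
        distributed M lborel (\<lambda>\<omega>. W t \<omega> - W s \<omega>) (normal_density 0 (sqrt (t - s))) \<and>
        prob_space.indep_set M (sets (F s))
          {(\<lambda>\<omega>. W t \<omega> - W s \<omega>) -` A \<inter> space M | A. A \<in> sets borel})"

definition gen_sigma :: "'a measure \<Rightarrow> ('a \<Rightarrow> real) set \<Rightarrow> 'a set set" where
  "gen_sigma M Xs = sigma_sets (space M) {X -` A \<inter> space M | X A. X \<in> Xs \<and> A \<in> sets borel}"

end

theory Submission
  imports Defs
begin

lemma LINT_abs_bound:
  fixes f :: "real \<Rightarrow> real"
  assumes B: "\<And>r. r \<in> {a..b} \<Longrightarrow> \<bar>f r\<bar> \<le> B" and ab: "a \<le> b"
  shows "\<bar>set_lebesgue_integral lborel {a..b} f\<bar> \<le> B * (b - a)"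
proof -
  have B0: "0 \<le> B" using B[of a] ab by auto
  show ?thesis
  proof (cases "set_integrable lborel {a..b} f")
    case True
    have "\<bar>set_lebesgue_integral lborel {a..b} f\<bar> \<le> set_lebesgue_integral lborel {a..b} (\<lambda>r. \<bar>f r\<bar>)"
      using set_integral_norm_bound[OF True] by simp
    also have "\<dots> \<le> set_lebesgue_integral lborel {a..b} (\<lambda>r. B)"
      using B by (intro set_integral_mono set_integrable_abs True borel_integrable_atLeastAtMost' continuous_on_const) auto
    also have "\<dots> = B * (b - a)" using ab by (simp add: set_integral_const)
    finally show ?thesis .
  next
    case False
    then have "set_lebesgue_integral lborel {a..b} f = 0"
      unfolding set_lebesgue_integral_def set_integrable_def
      by (simp add: not_integrable_integral_eq)
    then show ?thesis using B0 ab by simp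
  qed
qed

lemma LINT_nonneg:
  fixes f :: "real \<Rightarrow> real"
  assumes "\<And>r. r \<in> {a..b} \<Longrightarrow> 0 \<le> f r"
  shows "0 \<le> set_lebesgue_integral lborel {a..b} f"
  unfolding set_lebesgue_integral_def
  by (rule integral_nonneg_AE) (auto simp: assms indicator_def)

definition mb :: "real \<Rightarrow> (real \<Rightarrow> real) \<Rightarrow> bool" where
  "mb T f \<longleftrightarrow> (\<lambda>r. indicator {0..T} r * f r) \<in> borel_measurable borel \<and> (\<exists>B. \<forall>r\<in>{0..T}. \<bar>f r\<bar> \<le> B)"

lemma mb_SI:
  assumes "mb T f" "0 \<le> a" "b \<le> T"
  shows "set_integrable lborel {a..b} f"
proof -
  obtain B where B: "\<forall>r\<in>{0..T}. \<bar>f r\<bar> \<le> B" and m: "(\<lambda>r. indicator {0..T} r * f r) \<in> borel_measurable borel"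
    using assms(1) unfolding mb_def by blast
  have "integrable lborel (\<lambda>x. indicator {a..b} x *\<^sub>R (indicator {0..T} x * f x))"
    by (rule integrableI_bounded_set_indicator[where B=B]) (use m B assms in \<open>auto simp: indicator_def emeasure_lborel_Icc_eq\<close>)
  moreover have "(\<lambda>x. indicator {a..b} x *\<^sub>R (indicator {0..T} x * f x)) = (\<lambda>x. indicator {a..b} x *\<^sub>R f x)"
    using assms by (auto simp: indicator_def fun_eq_iff)
  ultimately show ?thesis unfolding set_integrable_def by simp
qed

lemma mb_HK:
  assumes "mb T f" "0 \<le> a" "b \<le> T"
  shows "set_lebesgue_integral lborel {a..b} f = integral {a..b} f" "f integrable_on {a..b}"
  using set_borel_integral_eq_integral[OF mb_SI[OF assms]] by auto

lemma mb_intro: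
  assumes "(\<lambda>r. indicator {0..T} r * f r) \<in> borel_measurable borel" "\<And>r. r \<in> {0..T} \<Longrightarrow> \<bar>f r\<bar> \<le> B"
  shows "mb T f"
  using assms unfolding mb_def by blast

lemma mb_cont:
  assumes "continuous_on {0..T} f"
  shows "mb T f"
proof -
  have "(\<lambda>r. indicator {0..T} r * f r) \<in> borel_measurable borel"
    using borel_measurable_continuous_on_indicator[OF _ assms] by simp
  moreover obtain B where "\<forall>r\<in>{0..T}. norm (f r) \<le> B"
    using compact_imp_bounded[OF compact_continuous_image[OF assms compact_Icc]]
    unfolding bounded_iff by auto
  ultimately show ?thesis unfolding mb_def by auto
qed

lemma mb_add: "mb T f \<Longrightarrow> mb T g \<Longrightarrow> mb T (\<lambda>r. f r + g r)"
  unfolding mb_def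
  apply (auto simp: distrib_left)
  subgoal for B B' by (rule exI[of _ "B + B'"]) (smt (verit, best) abs_triangle_ineq)
  done

lemma mb_sum: "finite I \<Longrightarrow> (\<And>j. j \<in> I \<Longrightarrow> mb T (f j)) \<Longrightarrow> mb T (\<lambda>r. \<Sum>j\<in>I. f j r)"
  apply (induction I rule: finite_induct)
   apply (auto simp: mb_def)[1]
  apply (simp add: mb_add)
  done

lemma mb_cmult: "mb T f \<Longrightarrow> mb T (\<lambda>r. c * f r)"
  unfolding mb_def
  apply (auto simp: mult.left_commute[of _ c])
  subgoal for B by (rule exI[of _ "\<bar>c\<bar> * B"]) (auto simp: abs_mult intro: mult_left_mono)
  done

lemma mb_pw:
  fixes \<sigma> :: ereal
  assumes g1: "continuous_on {r. 0 \<le> r \<and> r \<le> T \<and> ereal r < \<sigma>} g1"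
    and g2: "continuous_on {0..T} g2"
    and B: "\<And>r. r \<in> {0..T} \<Longrightarrow> \<bar>if ereal r < \<sigma> then g1 r else g2 r\<bar> \<le> B"
  shows "mb T (\<lambda>r. if ereal r < \<sigma> then g1 r else g2 r)"
proof (rule mb_intro[OF _ B])
  let ?A = "{r. 0 \<le> r \<and> r \<le> T \<and> ereal r < \<sigma>}"
  let ?B = "{r. 0 \<le> r \<and> r \<le> T \<and> \<not> ereal r < \<sigma>}"
  have A: "?A \<in> sets borel" by measurable
  have Bs: "?B \<in> sets borel" by measurable
  have c2: "continuous_on ?B g2" by (rule continuous_on_subset[OF g2]) auto
  have "(\<lambda>r. indicator ?A r *\<^sub>R g1 r + indicator ?B r *\<^sub>R g2 r) \<in> borel_measurable borel"
    using borel_measurable_continuous_on_indicator[OF A g1] borel_measurable_continuous_on_indicator[OF Bs c2]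
    by measurable
  moreover have "(\<lambda>r. indicator ?A r *\<^sub>R g1 r + indicator ?B r *\<^sub>R g2 r) =
      (\<lambda>r. indicator {0..T} r * (if ereal r < \<sigma> then g1 r else g2 r))"
    by (auto simp: indicator_def fun_eq_iff)
  ultimately show "(\<lambda>r. indicator {0..T} r * (if ereal r < \<sigma> then g1 r else g2 r)) \<in> borel_measurable borel"
    by simp
qed


definition mk :: "(nat \<Rightarrow> ereal) \<Rightarrow> (nat \<Rightarrow> real \<Rightarrow> real) \<Rightarrow> nat \<Rightarrow> real \<Rightarrow> real option" where
  "mk \<sigma> y j r = (if ereal r < \<sigma> j then Some (y j r) else None)"

definition good :: "real \<Rightarrow> nat \<Rightarrow> (nat \<Rightarrow> ereal) \<Rightarrow> (nat \<Rightarrow> real \<Rightarrow> real) \<Rightarrow> bool" where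
  "good T N \<sigma> y \<longleftrightarrow> (\<forall>j<N. continuous_on {r. 0 \<le> r \<and> r \<le> T \<and> ereal r < \<sigma> j} (y j))"

lemma ext0_mk: "ext0 f (mk \<sigma> y j r) = (if ereal r < \<sigma> j then f (y j r) else 0)"
  by (simp add: ext0_def mk_def)

lemma uN_mk: "uN N \<kappa> (mk \<sigma> y) r x = (1 / real N) * (\<Sum>j<N. if ereal r < \<sigma> j then \<kappa> (x - y j r) else 0)"
  by (simp add: uN_def ext0_mk)

locale kern =
  fixes \<kappa> :: "real \<Rightarrow> real" and B L :: real
  assumes kb: "\<And>v. \<bar>\<kappa> v\<bar> \<le> B" and kl: "\<And>u v. \<bar>\<kappa> u - \<kappa> v\<bar> \<le> L * \<bar>u - v\<bar>"
begin

lemma B0: "0 \<le> B" using kb[of 0] by simp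
lemma L0: "0 \<le> L"
proof -
  have "\<bar>\<kappa> 1 - \<kappa> 0\<bar> \<le> L" using kl[of 1 0] by simp
  then show ?thesis by (rule order_trans[OF abs_ge_zero])
qed

lemma kcont: "continuous_on S \<kappa>"
proof -
  have "lipschitz_on L UNIV \<kappa>"
    by (rule lipschitz_onI) (use kl L0 in \<open>auto simp: dist_real_def\<close>)
  then show ?thesis using lipschitz_on_continuous_on continuous_on_subset by blast
qed

lemma uN_bound: "\<bar>uN N \<kappa> \<xi> r x\<bar> \<le> B"
proof (cases "N = 0")
  case True then show ?thesis by (simp add: uN_def B0)
next
  case False
  have "\<bar>\<Sum>j<N. ext0 (\<lambda>y. \<kappa> (x - y)) (\<xi> j r)\<bar> \<le> (\<Sum>j<N. B)"
    by (rule order_trans[OF sum_abs sum_mono]) (auto simp: ext0_def kb B0 split: option.splits)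
  then show ?thesis using False by (simp add: uN_def abs_mult field_simps)
qed

lemma uN_lip: "\<bar>uN N \<kappa> \<xi> r x - uN N \<kappa> \<xi> r x'\<bar> \<le> L * \<bar>x - x'\<bar>"
proof (cases "N = 0")
  case True then show ?thesis by (simp add: uN_def L0)
next
  case False
  have "\<bar>(\<Sum>j<N. ext0 (\<lambda>y. \<kappa> (x - y)) (\<xi> j r)) - (\<Sum>j<N. ext0 (\<lambda>y. \<kappa> (x' - y)) (\<xi> j r))\<bar>
      \<le> (\<Sum>j<N. L * \<bar>x - x'\<bar>)"
    unfolding sum_subtractf[symmetric]
  proof (rule order_trans[OF sum_abs sum_mono])
    fix j
    show "\<bar>ext0 (\<lambda>y. \<kappa> (x - y)) (\<xi> j r) - ext0 (\<lambda>y. \<kappa> (x' - y)) (\<xi> j r)\<bar> \<le> L * \<bar>x - x'\<bar>"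
    proof (cases "\<xi> j r")
      case None then show ?thesis by (simp add: ext0_def L0)
    next
      case (Some v)
      then show ?thesis using kl[of "x - v" "x' - v"] by (simp add: ext0_def)
    qed
  qed
  then show ?thesis using False
    by (simp add: uN_def abs_mult field_simps flip: right_diff_distrib)
qed

lemma intuN_bound: "0 \<le> s \<Longrightarrow> \<bar>intuN N \<kappa> \<xi> s x\<bar> \<le> B * s"
  unfolding intuN_def using LINT_abs_bound[of 0 s "\<lambda>r. uN N \<kappa> \<xi> r x" B] uN_bound by simp

lemma mb_uN: "good T N \<sigma> y \<Longrightarrow> mb T (\<lambda>r. uN N \<kappa> (mk \<sigma> y) r x)"
  unfolding uN_mk
proof (intro mb_cmult mb_sum mb_pw)
  fix j assume j: "j \<in> {..<N}" and g: "good T N \<sigma> y"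
  then have "continuous_on {r. 0 \<le> r \<and> r \<le> T \<and> ereal r < \<sigma> j} (y j)" by (auto simp: good_def)
  then show "continuous_on {r. 0 \<le> r \<and> r \<le> T \<and> ereal r < \<sigma> j} (\<lambda>r. \<kappa> (x - y j r))"
    by (intro continuous_on_compose2[OF kcont[of UNIV] _ subset_UNIV] continuous_on_diff continuous_on_const)
  fix r show "\<bar>if ereal r < \<sigma> j then \<kappa> (x - y j r) else 0\<bar> \<le> B" by (simp add: kb B0)
qed auto

lemma intuN_lip:
  assumes g: "good T N \<sigma> y" and s: "0 \<le> s" "s \<le> T"
  shows "\<bar>intuN N \<kappa> (mk \<sigma> y) s x - intuN N \<kappa> (mk \<sigma> y) s x'\<bar> \<le> L * \<bar>x - x'\<bar> * s"
proof -
  have i1: "set_integrable lborel {0..s} (\<lambda>r. uN N \<kappa> (mk \<sigma> y) r x)"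
    and i2: "set_integrable lborel {0..s} (\<lambda>r. uN N \<kappa> (mk \<sigma> y) r x')"
    using mb_SI[OF mb_uN[OF g]] s by auto
  have "intuN N \<kappa> (mk \<sigma> y) s x - intuN N \<kappa> (mk \<sigma> y) s x' =
      set_lebesgue_integral lborel {0..s} (\<lambda>r. uN N \<kappa> (mk \<sigma> y) r x - uN N \<kappa> (mk \<sigma> y) r x')"
    unfolding intuN_def by (rule set_integral_diff(2)[OF i1 i2, symmetric])
  also have "\<bar>\<dots>\<bar> \<le> L * \<bar>x - x'\<bar> * (s - 0)"
    by (rule LINT_abs_bound) (use uN_lip s in auto)
  finally show ?thesis by simp
qed

lemma intuN_tlip:
  assumes g: "good T N \<sigma> y" and s: "0 \<le> s" "s \<le> s'" "s' \<le> T"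
  shows "\<bar>intuN N \<kappa> (mk \<sigma> y) s' x - intuN N \<kappa> (mk \<sigma> y) s x\<bar> \<le> B * (s' - s)"
proof -
  let ?f = "\<lambda>r. uN N \<kappa> (mk \<sigma> y) r x"
  have m: "mb T ?f" by (rule mb_uN[OF g])
  have "intuN N \<kappa> (mk \<sigma> y) s' x = integral {0..s'} ?f" unfolding intuN_def using mb_HK[OF m] s by auto
  also have "\<dots> = integral {0..s} ?f + integral {s..s'} ?f"
    by (rule Henstock_Kurzweil_Integration.integral_combine[symmetric]) (use mb_HK[OF m] s in auto)
  also have "integral {0..s} ?f = intuN N \<kappa> (mk \<sigma> y) s x" unfolding intuN_def using mb_HK[OF m] s by auto
  also have "integral {s..s'} ?f = set_lebesgue_integral lborel {s..s'} ?f" using mb_HK[OF m] s by auto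
  finally have "intuN N \<kappa> (mk \<sigma> y) s' x - intuN N \<kappa> (mk \<sigma> y) s x = set_lebesgue_integral lborel {s..s'} ?f"
    by simp
  also have "\<bar>\<dots>\<bar> \<le> B * (s' - s)" by (rule LINT_abs_bound) (use uN_bound s in auto)
  finally show ?thesis .
qed

lemma intuN_cont2:
  assumes g: "good T N \<sigma> y"
  shows "continuous_on ({0..T} \<times> UNIV) (\<lambda>(s, x). intuN N \<kappa> (mk \<sigma> y) s x)"
proof -
  let ?h = "\<lambda>(s, x). intuN N \<kappa> (mk \<sigma> y) s x"
  have "lipschitz_on (2 * (B + L * \<bar>T\<bar>)) ({0..T} \<times> UNIV) ?h"
  proof (rule lipschitz_onI)
    fix a b :: "real \<times> real" assume a: "a \<in> {0..T} \<times> UNIV" and b: "b \<in> {0..T} \<times> UNIV"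
    obtain s x where [simp]: "a = (s, x)" by (cases a)
    obtain s' x' where [simp]: "b = (s', x')" by (cases b)
    have ds: "\<bar>s - s'\<bar> \<le> dist a b" and dx: "\<bar>x - x'\<bar> \<le> dist a b"
      using dist_fst_le[of a b] dist_snd_le[of a b] by (auto simp: dist_real_def)
    have t1: "\<bar>intuN N \<kappa> (mk \<sigma> y) s x - intuN N \<kappa> (mk \<sigma> y) s' x\<bar> \<le> B * \<bar>s - s'\<bar>"
    proof (cases "s \<le> s'")
      case True then show ?thesis using intuN_tlip[OF g, of s s' x] a b by auto
    next
      case False then show ?thesis using intuN_tlip[OF g, of s' s x] a b by auto
    qed
    have t2: "\<bar>intuN N \<kappa> (mk \<sigma> y) s' x - intuN N \<kappa> (mk \<sigma> y) s' x'\<bar> \<le> L * \<bar>x - x'\<bar> * s'"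
      using intuN_lip[OF g, of s' x x'] b by auto
    have "L * \<bar>x - x'\<bar> * s' \<le> L * dist a b * \<bar>T\<bar>"
      using b dx L0 by (intro mult_mono) auto
    have "B * \<bar>s - s'\<bar> \<le> B * dist a b" using ds B0 by (intro mult_left_mono) auto
    have "0 \<le> L * dist a b * \<bar>T\<bar>" using L0 b by auto
    show "dist (?h a) (?h b) \<le> 2 * (B + L * \<bar>T\<bar>) * dist a b"
    proof -
      have "dist (?h a) (?h b) \<le> B * \<bar>s - s'\<bar> + L * \<bar>x - x'\<bar> * s'"
        using t1 t2 by (simp add: dist_real_def)
      moreover have "2 * (B + L * \<bar>T\<bar>) * dist a b = 2 * (B * dist a b) + 2 * (L * dist a b * \<bar>T\<bar>)"
        by (simp add: algebra_simps)
      moreover have "0 \<le> B * dist a b" using B0 by simp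
      ultimately show ?thesis
        using \<open>L * \<bar>x - x'\<bar> * s' \<le> L * dist a b * \<bar>T\<bar>\<close> \<open>B * \<bar>s - s'\<bar> \<le> B * dist a b\<close>
          \<open>0 \<le> L * dist a b * \<bar>T\<bar>\<close> by linarith
    qed
  next
    show "0 \<le> 2 * (B + L * \<bar>T\<bar>)" using B0 L0 by auto
  qed
  then show ?thesis using lipschitz_on_continuous_on by blast
qed

end


lemma exp_lip:
  fixes a b :: real
  assumes "a \<le> 0" "b \<le> 0"
  shows "\<bar>exp a - exp b\<bar> \<le> \<bar>a - b\<bar>"
proof -
  have *: "\<bar>exp a - exp b\<bar> \<le> \<bar>a - b\<bar>" if ab: "a \<le> b" "b \<le> 0" for a b :: real
  proof -
    have e: "exp a = exp b * exp (a - b)" by (simp add: exp_diff)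
    have "exp (a - b) \<le> 1" using ab by simp
    have "1 + (a - b) \<le> exp (a - b)" by (rule exp_ge_add_one_self)
    have "exp b \<le> 1" using ab by simp
    have "exp b - exp a = exp b * (1 - exp (a - b))" using e by (simp add: algebra_simps)
    also have "\<dots> \<le> 1 * (1 - exp (a - b))"
      using \<open>exp b \<le> 1\<close> \<open>exp (a - b) \<le> 1\<close> by (intro mult_right_mono) auto
    also have "\<dots> \<le> b - a" using \<open>1 + (a - b) \<le> exp (a - b)\<close> unfolding mult_1 by linarith
    finally have "exp b - exp a \<le> b - a" .
    moreover have "exp a \<le> exp b" using ab by simp
    ultimately show ?thesis using ab by simp
  qed
  show ?thesis
  proof (cases "a \<le> b")
    case True then show ?thesis using * assms by blast
  next
    case False then show ?thesis using *[of b a] assms by (simp add: abs_minus_commute)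
  qed
qed

locale ksys =
  fixes T :: real and N :: nat and K dK :: "real \<Rightarrow> real"
    and lam c0 phi0 phi1 m Mb MK MK' LK LK' :: real
  assumes T_pos: "T > 0"
    and K_nonneg: "\<And>x. K x \<ge> 0"
    and K_bdd: "\<And>x. \<bar>K x\<bar> \<le> MK" and dK_bdd: "\<And>x. \<bar>dK x\<bar> \<le> MK'"
    and K_lip: "\<And>x y. \<bar>K x - K y\<bar> \<le> LK * \<bar>x - y\<bar>"
    and dK_lip: "\<And>x y. \<bar>dK x - dK y\<bar> \<le> LK' * \<bar>x - y\<bar>"
    and lam_pos: "lam > 0" and c0_pos: "c0 > 0" and phi0_pos: "phi0 > 0"
    and m_pos: "0 < m"
    and phi_bounds: "\<And>x. 0 \<le> x \<Longrightarrow> x \<le> MK * T \<Longrightarrow>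
        m \<le> phi0 + phi1 * c0 * exp (- lam * x) \<and> phi0 + phi1 * c0 * exp (- lam * x) \<le> Mb"
begin

sublocale kK: kern K MK LK by unfold_locales (auto intro: K_bdd K_lip)
sublocale kD: kern dK MK' LK' by unfold_locales (auto intro: dK_bdd dK_lip)

abbreviation drf :: "real \<Rightarrow> real \<Rightarrow> real" where
  "drf \<equiv> drift_b lam c0 phi0 phi1"

definition Den :: "real \<Rightarrow> real" where "Den x = phi0 + phi1 * c0 * exp (- lam * x)"
definition hh :: "real \<Rightarrow> real" where "hh x = exp (- lam * x) / Den x"

definition Cb :: real where "Cb = \<bar>phi1\<bar> * lam * c0 * (1 / m) * (MK' * T)"
definition Lb :: real where "Lb = \<bar>phi1\<bar> * lam * c0 * (1 / m + MK' * T * phi0 * lam / m\<^sup>2)"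

lemma Den_ge: "0 \<le> x \<Longrightarrow> x \<le> MK * T \<Longrightarrow> m \<le> Den x"
  using phi_bounds unfolding Den_def by blast

lemma drf_eq: "drf x y = - (phi1 * lam * c0) * (hh x * y)"
  by (simp add: drift_b_def hh_def Den_def)

lemma hh_bound: assumes "0 \<le> x" "x \<le> MK * T" shows "\<bar>hh x\<bar> \<le> 1 / m"
proof -
  have D: "m \<le> Den x" using Den_ge assms by blast
  have "exp (- lam * x) \<le> 1" using assms lam_pos by simp
  then have "exp (- lam * x) / Den x \<le> 1 / Den x" using D m_pos by (intro divide_right_mono) auto
  also have "\<dots> \<le> 1 / m" using D m_pos by (intro divide_left_mono) auto
  finally show ?thesis using D m_pos by (simp add: hh_def)
qed

lemma hh_lip:
  assumes "0 \<le> x" "x \<le> MK * T" "0 \<le> x'" "x' \<le> MK * T"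
  shows "\<bar>hh x - hh x'\<bar> \<le> phi0 * lam / m\<^sup>2 * \<bar>x - x'\<bar>"
proof -
  have D: "m \<le> Den x" "m \<le> Den x'" using Den_ge assms by blast+
  have pos: "0 < Den x" "0 < Den x'" using D m_pos by linarith+
  have "hh x - hh x' = (exp (- lam * x) * Den x' - exp (- lam * x') * Den x) / (Den x * Den x')"
    unfolding hh_def using pos by (simp add: diff_frac_eq)
  also have "exp (- lam * x) * Den x' - exp (- lam * x') * Den x = phi0 * (exp (- lam * x) - exp (- lam * x'))"
    by (simp add: Den_def algebra_simps)
  finally have e: "\<bar>hh x - hh x'\<bar> = phi0 * \<bar>exp (- lam * x) - exp (- lam * x')\<bar> / (Den x * Den x')"
    using pos phi0_pos by (simp add: abs_mult)
  have "\<bar>exp (- lam * x) - exp (- lam * x')\<bar> \<le> \<bar>(- lam * x) - (- lam * x')\<bar>"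
    using assms lam_pos by (intro exp_lip) auto
  also have "(- lam * x) - (- lam * x') = lam * (x' - x)" by (simp add: algebra_simps)
  also have "\<bar>lam * (x' - x)\<bar> = lam * \<bar>x - x'\<bar>" using lam_pos by (simp add: abs_mult abs_minus_commute)
  finally have ex: "\<bar>exp (- lam * x) - exp (- lam * x')\<bar> \<le> lam * \<bar>x - x'\<bar>" .
  have "m * m \<le> Den x * Den x'" by (rule mult_mono) (use D m_pos in auto)
  then have mm: "m\<^sup>2 \<le> Den x * Den x'" by (simp add: power2_eq_square)
  have "phi0 * \<bar>exp (- lam * x) - exp (- lam * x')\<bar> / (Den x * Den x') \<le> phi0 * (lam * \<bar>x - x'\<bar>) / (Den x * Den x')"
    using ex phi0_pos pos by (intro divide_right_mono mult_left_mono) auto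
  also have "\<dots> \<le> phi0 * (lam * \<bar>x - x'\<bar>) / m\<^sup>2"
    using mm m_pos phi0_pos lam_pos pos by (intro divide_left_mono) auto
  also have "\<dots> = phi0 * lam / m\<^sup>2 * \<bar>x - x'\<bar>" by simp
  finally show ?thesis using e by simp
qed

lemma drf_bound:
  assumes "0 \<le> x" "x \<le> MK * T" "\<bar>y\<bar> \<le> MK' * T"
  shows "\<bar>drf x y\<bar> \<le> Cb"
proof -
  have "\<bar>drf x y\<bar> = \<bar>phi1\<bar> * lam * c0 * (\<bar>hh x\<bar> * \<bar>y\<bar>)"
    using lam_pos c0_pos by (simp add: drf_eq abs_mult)
  also have "\<dots> \<le> \<bar>phi1\<bar> * lam * c0 * (1 / m * (MK' * T))"
    using hh_bound[OF assms(1,2)] assms lam_pos c0_pos m_pos by (intro mult_left_mono mult_mono) auto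
  finally show ?thesis by (simp add: Cb_def)
qed

lemma drf_lip:
  assumes "0 \<le> x" "x \<le> MK * T" "\<bar>y\<bar> \<le> MK' * T" "0 \<le> x'" "x' \<le> MK * T" "\<bar>y'\<bar> \<le> MK' * T"
  shows "\<bar>drf x y - drf x' y'\<bar> \<le> Lb * (\<bar>x - x'\<bar> + \<bar>y - y'\<bar>)"
proof -
  have "hh x * y - hh x' * y' = hh x * (y - y') + (hh x - hh x') * y'" by (simp add: algebra_simps)
  then have "\<bar>hh x * y - hh x' * y'\<bar> \<le> \<bar>hh x\<bar> * \<bar>y - y'\<bar> + \<bar>hh x - hh x'\<bar> * \<bar>y'\<bar>"
    by (metis abs_mult abs_triangle_ineq)
  also have "\<dots> \<le> 1 / m * \<bar>y - y'\<bar> + (phi0 * lam / m\<^sup>2 * \<bar>x - x'\<bar>) * (MK' * T)"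
    using hh_bound[OF assms(1,2)] hh_lip[OF assms(1,2,4,5)] assms m_pos
    by (intro add_mono mult_mono) auto
  also have "\<dots> = 1 / m * \<bar>y - y'\<bar> + (MK' * T * phi0 * lam / m\<^sup>2) * \<bar>x - x'\<bar>" by (simp add: algebra_simps)
  also have "\<dots> \<le> (1 / m + MK' * T * phi0 * lam / m\<^sup>2) * (\<bar>x - x'\<bar> + \<bar>y - y'\<bar>)"
  proof -
    have a: "0 \<le> 1 / m" using m_pos by simp
    have b: "0 \<le> MK' * T * phi0 * lam / m\<^sup>2" using kD.B0 T_pos phi0_pos lam_pos by simp
    have "1 / m * \<bar>y - y'\<bar> \<le> 1 / m * (\<bar>x - x'\<bar> + \<bar>y - y'\<bar>)" using a by (intro mult_left_mono) auto
    moreover have "(MK' * T * phi0 * lam / m\<^sup>2) * \<bar>x - x'\<bar> \<le> (MK' * T * phi0 * lam / m\<^sup>2) * (\<bar>x - x'\<bar> + \<bar>y - y'\<bar>)"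
      using b by (intro mult_left_mono) auto
    ultimately show ?thesis by (simp add: distrib_right)
  qed
  finally have h: "\<bar>hh x * y - hh x' * y'\<bar> \<le> (1 / m + MK' * T * phi0 * lam / m\<^sup>2) * (\<bar>x - x'\<bar> + \<bar>y - y'\<bar>)" .
  have "\<bar>drf x y - drf x' y'\<bar> = \<bar>phi1\<bar> * lam * c0 * \<bar>hh x * y - hh x' * y'\<bar>"
    using lam_pos c0_pos by (simp add: drf_eq abs_mult abs_minus_commute flip: right_diff_distrib)
  also have "\<dots> \<le> \<bar>phi1\<bar> * lam * c0 * ((1 / m + MK' * T * phi0 * lam / m\<^sup>2) * (\<bar>x - x'\<bar> + \<bar>y - y'\<bar>))"
    using h lam_pos c0_pos by (intro mult_left_mono) auto
  finally show ?thesis by (simp add: Lb_def)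
qed

lemma Lb_nonneg: "0 \<le> Lb"
  unfolding Lb_def using lam_pos c0_pos m_pos kD.B0 T_pos phi0_pos by simp

lemma Cb_nonneg: "0 \<le> Cb"
  unfolding Cb_def using lam_pos c0_pos m_pos kD.B0 T_pos by simp

lemma drf_cont:
  "continuous_on ({x. 0 \<le> x \<and> x \<le> MK * T} \<times> UNIV) (\<lambda>(x, y). drf x y)"
proof -
  have "continuous_on ({x. 0 \<le> x \<and> x \<le> MK * T} \<times> UNIV)
      (\<lambda>p. - phi1 * lam * c0 * (exp (- lam * fst p) * snd p) / (phi0 + phi1 * c0 * exp (- lam * fst p)))"
  proof -
    have nz: "\<forall>p\<in>{x. 0 \<le> x \<and> x \<le> MK * T} \<times> (UNIV::real set). phi0 + phi1 * c0 * exp (- lam * fst p) \<noteq> 0"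
    proof
      fix p :: "real \<times> real" assume "p \<in> {x. 0 \<le> x \<and> x \<le> MK * T} \<times> UNIV"
      then have "m \<le> Den (fst p)" using Den_ge by auto
      then show "phi0 + phi1 * c0 * exp (- lam * fst p) \<noteq> 0" using m_pos by (simp add: Den_def)
    qed
    show ?thesis by (intro continuous_intros) (use nz in auto)
  qed
  then show ?thesis by (simp add: drift_b_def case_prod_beta)
qed

lemma uN_K_nonneg: "0 \<le> uN N K \<xi> r x"
  unfolding uN_def by (auto simp: ext0_def K_nonneg split: option.splits intro!: sum_nonneg divide_nonneg_nonneg)

lemma intuN_range: "0 \<le> s \<Longrightarrow> s \<le> T \<Longrightarrow> 0 \<le> intuN N K \<xi> s x \<and> intuN N K \<xi> s x \<le> MK * T"
proof -
  assume s: "0 \<le> s" "s \<le> T"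
  have "0 \<le> intuN N K \<xi> s x" unfolding intuN_def by (rule LINT_nonneg) (simp add: uN_K_nonneg)
  moreover have "intuN N K \<xi> s x \<le> MK * s" using kK.intuN_bound[OF s(1), of N \<xi> x] by simp
  moreover have "MK * s \<le> MK * T" using s kK.B0 by (intro mult_left_mono) auto
  ultimately show ?thesis by simp
qed

lemma gradUN_eq: "gradUN N dK \<xi> s x = intuN N dK \<xi> s x"
  by (simp add: gradUN_def intuN_def)

lemma gradUN_range: "0 \<le> s \<Longrightarrow> s \<le> T \<Longrightarrow> \<bar>gradUN N dK \<xi> s x\<bar> \<le> MK' * T"
proof -
  assume s: "0 \<le> s" "s \<le> T"
  have "\<bar>gradUN N dK \<xi> s x\<bar> \<le> MK' * s" using kD.intuN_bound[OF s(1)] by (simp add: gradUN_eq)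
  also have "MK' * s \<le> MK' * T" using s kD.B0 by (intro mult_left_mono) auto
  finally show ?thesis .
qed

end


lemma good_mono: "good t N \<rho> y \<Longrightarrow> (\<And>j. j < N \<Longrightarrow> \<sigma> j \<le> \<rho> j) \<Longrightarrow> good t N \<sigma> y"
  unfolding good_def
proof (intro allI impI)
  fix j assume a: "\<forall>j<N. continuous_on {r. 0 \<le> r \<and> r \<le> t \<and> ereal r < \<rho> j} (y j)"
    and b: "\<And>j. j < N \<Longrightarrow> \<sigma> j \<le> \<rho> j" and j: "j < N"
  show "continuous_on {r. 0 \<le> r \<and> r \<le> t \<and> ereal r < \<sigma> j} (y j)"
    by (rule continuous_on_subset[OF a[rule_format, OF j]]) (use b[OF j] in \<open>auto dest: order.strict_trans2\<close>)
qed

lemma LINT_diff_bound: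
  fixes f g h :: "real \<Rightarrow> real"
  assumes "set_integrable lborel {a..b} f" "set_integrable lborel {a..b} g" "set_integrable lborel {a..b} h"
    and "\<And>s. s \<in> {a..b} \<Longrightarrow> \<bar>f s - g s\<bar> \<le> h s"
  shows "\<bar>set_lebesgue_integral lborel {a..b} f - set_lebesgue_integral lborel {a..b} g\<bar>
     \<le> set_lebesgue_integral lborel {a..b} h"
proof -
  have d: "set_integrable lborel {a..b} (\<lambda>s. f s - g s)" using assms(1,2) by (rule set_integral_diff(1))
  have "set_lebesgue_integral lborel {a..b} f - set_lebesgue_integral lborel {a..b} g =
      set_lebesgue_integral lborel {a..b} (\<lambda>s. f s - g s)"
    using assms(1,2) by (rule set_integral_diff(2)[symmetric])
  also have "\<bar>\<dots>\<bar> \<le> set_lebesgue_integral lborel {a..b} (\<lambda>s. \<bar>f s - g s\<bar>)"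
    using set_integral_norm_bound[OF d] by simp
  also have "\<dots> \<le> set_lebesgue_integral lborel {a..b} h"
    using assms(3,4) d by (intro set_integral_mono set_integrable_abs) auto
  finally show ?thesis .
qed

lemma LINT_pow:
  assumes "0 \<le> t"
  shows "set_lebesgue_integral lborel {0..t} (\<lambda>s. c * s ^ n) = c * t ^ Suc n / Suc n"
proof -
  have "set_lebesgue_integral lborel {0..t} (\<lambda>s. c * s ^ n) = c * (\<integral>x. x ^ n * indicator {0..t} x \<partial>lborel)"
    unfolding set_lebesgue_integral_def by (simp add: mult.commute mult.left_commute mult.assoc flip: integral_mult_right_zero)
  also have "\<dots> = c * (t ^ Suc n / Suc n)" using integral_power[OF assms, of n] by simp
  finally show ?thesis by simp
qed

context kern
begin

lemma diffU:
  assumes g: "good t1 N \<sigma> y" and g': "good t1 N \<sigma> y'" and s: "0 \<le> s" "s \<le> t1" and E: "0 \<le> E"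
    and h: "\<And>j r. j < N \<Longrightarrow> r \<in> {0..s} \<Longrightarrow> ereal r < \<sigma> j \<Longrightarrow> \<bar>y j r - y' j r\<bar> \<le> E"
  shows "\<bar>intuN N \<kappa> (mk \<sigma> y) s a - intuN N \<kappa> (mk \<sigma> y') s b\<bar> \<le> L * (\<bar>a - b\<bar> + E) * s"
proof -
  have i1: "set_integrable lborel {0..s} (\<lambda>r. uN N \<kappa> (mk \<sigma> y) r a)"
    and i2: "set_integrable lborel {0..s} (\<lambda>r. uN N \<kappa> (mk \<sigma> y') r b)"
    using mb_SI[OF mb_uN[OF g]] mb_SI[OF mb_uN[OF g']] s by auto
  have pt: "\<bar>uN N \<kappa> (mk \<sigma> y) r a - uN N \<kappa> (mk \<sigma> y') r b\<bar> \<le> L * (\<bar>a - b\<bar> + E)" if r: "r \<in> {0..s}" for r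
  proof (cases "N = 0")
    case True then show ?thesis using L0 E by (simp add: uN_def)
  next
    case False
    have "\<bar>(\<Sum>j<N. if ereal r < \<sigma> j then \<kappa> (a - y j r) else 0) - (\<Sum>j<N. if ereal r < \<sigma> j then \<kappa> (b - y' j r) else 0)\<bar>
        \<le> (\<Sum>j<N. L * (\<bar>a - b\<bar> + E))"
      unfolding sum_subtractf[symmetric]
    proof (rule order_trans[OF sum_abs sum_mono])
      fix j assume j: "j \<in> {..<N}"
      show "\<bar>(if ereal r < \<sigma> j then \<kappa> (a - y j r) else 0) - (if ereal r < \<sigma> j then \<kappa> (b - y' j r) else 0)\<bar>
          \<le> L * (\<bar>a - b\<bar> + E)"
      proof (cases "ereal r < \<sigma> j")
        case True
        have "\<bar>\<kappa> (a - y j r) - \<kappa> (b - y' j r)\<bar> \<le> L * \<bar>(a - y j r) - (b - y' j r)\<bar>" by (rule kl)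
        also have "\<bar>(a - y j r) - (b - y' j r)\<bar> \<le> \<bar>a - b\<bar> + \<bar>y j r - y' j r\<bar>" by linarith
        also have "\<dots> \<le> \<bar>a - b\<bar> + E" using h[of j r] j r True by auto
        finally show ?thesis using True L0 by (simp add: mult_left_mono)
      next
        case False then show ?thesis using L0 E by simp
      qed
    qed
    then show ?thesis using False
      by (simp add: uN_mk abs_mult field_simps flip: right_diff_distrib)
  qed
  have "intuN N \<kappa> (mk \<sigma> y) s a - intuN N \<kappa> (mk \<sigma> y') s b =
      set_lebesgue_integral lborel {0..s} (\<lambda>r. uN N \<kappa> (mk \<sigma> y) r a - uN N \<kappa> (mk \<sigma> y') r b)"
    unfolding intuN_def by (rule set_integral_diff(2)[OF i1 i2, symmetric])
  also have "\<bar>\<dots>\<bar> \<le> L * (\<bar>a - b\<bar> + E) * (s - 0)"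
    by (rule LINT_abs_bound) (use pt s in auto)
  finally show ?thesis by simp
qed

end


context ksys
begin

definition ig :: "(nat \<Rightarrow> ereal) \<Rightarrow> (nat \<Rightarrow> real \<Rightarrow> real) \<Rightarrow> nat \<Rightarrow> real \<Rightarrow> real" where
  "ig \<sigma> y i s = drf (intuN N K (mk \<sigma> y) s (y i s)) (gradUN N dK (mk \<sigma> y) s (y i s))"

definition Ig :: "(nat \<Rightarrow> ereal) \<Rightarrow> (nat \<Rightarrow> real \<Rightarrow> real) \<Rightarrow> nat \<Rightarrow> real \<Rightarrow> real" where
  "Ig \<sigma> y i t = set_lebesgue_integral lborel {0..t} (ig \<sigma> y i)"

definition Lam :: real where "Lam = 2 * T * Lb * (LK + LK') + 1"

lemma Lam_ge1: "1 \<le> Lam"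
  unfolding Lam_def using T_pos Lb_nonneg kK.L0 kD.L0 by simp

lemma ig_bound: "0 \<le> s \<Longrightarrow> s \<le> T \<Longrightarrow> \<bar>ig \<sigma> y i s\<bar> \<le> Cb"
  unfolding ig_def using intuN_range gradUN_range by (intro drf_bound) auto

lemma Ig_bound: "0 \<le> t \<Longrightarrow> t \<le> T \<Longrightarrow> \<bar>Ig \<sigma> y i t\<bar> \<le> Cb * t"
  unfolding Ig_def using LINT_abs_bound[of 0 t "ig \<sigma> y i" Cb] ig_bound by simp

lemma ig_cont:
  assumes g: "good t1 N \<sigma> y" and t: "0 \<le> t" "t \<le> t1" "t1 \<le> T" and c: "continuous_on {0..t} (y i)"
  shows "continuous_on {0..t} (ig \<sigma> y i)"
proof -
  have c1: "continuous_on {0..t} (\<lambda>s. intuN N K (mk \<sigma> y) s (y i s))"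
    by (rule continuous_on_compose2[OF kK.intuN_cont2[OF g], of _ "\<lambda>s. (s, y i s)", simplified])
       (use t in \<open>auto intro!: continuous_intros c\<close>)
  have c2: "continuous_on {0..t} (\<lambda>s. gradUN N dK (mk \<sigma> y) s (y i s))"
    unfolding gradUN_eq
    by (rule continuous_on_compose2[OF kD.intuN_cont2[OF g], of _ "\<lambda>s. (s, y i s)", simplified])
       (use t in \<open>auto intro!: continuous_intros c\<close>)
  have "continuous_on {0..t} (\<lambda>s. (\<lambda>(a, b). drf a b) (intuN N K (mk \<sigma> y) s (y i s), gradUN N dK (mk \<sigma> y) s (y i s)))"
    by (rule continuous_on_compose2[OF drf_cont]) (use t intuN_range in \<open>auto intro!: continuous_intros c1 c2\<close>)
  then show ?thesis unfolding ig_def by simp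
qed

lemma step:
  assumes t1: "0 \<le> t1" "t1 \<le> T" and g: "good t1 N \<sigma> y" and g': "good t1 N \<sigma> y'"
    and t: "0 \<le> t" "t \<le> t1"
    and cy: "continuous_on {0..t} (y i)" and cy': "continuous_on {0..t} (y' i)" and C: "0 \<le> C"
    and hj: "\<And>j r. j < N \<Longrightarrow> r \<in> {0..t} \<Longrightarrow> ereal r < \<sigma> j \<Longrightarrow> \<bar>y j r - y' j r\<bar> \<le> C * (Lam * r) ^ n / fact n"
    and hi: "\<And>s. s \<in> {0..t} \<Longrightarrow> \<bar>y i s - y' i s\<bar> \<le> C * (Lam * s) ^ n / fact n"
  shows "\<bar>Ig \<sigma> y i t - Ig \<sigma> y' i t\<bar> \<le> C * (Lam * t) ^ Suc n / fact (Suc n)"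
proof -
  define D where "D s = C * (Lam * s) ^ n / fact n" for s
  define A where "A = 2 * T * Lb * (LK + LK')"
  have A0: "0 \<le> A" unfolding A_def using T_pos Lb_nonneg kK.L0 kD.L0 by simp
  have LamA: "Lam = A + 1" unfolding Lam_def A_def by simp
  have Dmono: "D r \<le> D s" if "0 \<le> r" "r \<le> s" for r s
    unfolding D_def using that C Lam_ge1
    by (intro divide_right_mono mult_left_mono power_mono mult_left_mono) auto
  have D0: "0 \<le> D s" if "0 \<le> s" for s unfolding D_def using that C Lam_ge1 by simp
  have pt: "\<bar>ig \<sigma> y i s - ig \<sigma> y' i s\<bar> \<le> A * D s" if s: "s \<in> {0..t}" for s
  proof -
    have s': "0 \<le> s" "s \<le> t1" "s \<le> T" using s t t1 by auto
    have hE: "\<And>j r. j < N \<Longrightarrow> r \<in> {0..s} \<Longrightarrow> ereal r < \<sigma> j \<Longrightarrow> \<bar>y j r - y' j r\<bar> \<le> D s"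
      using hj Dmono s unfolding D_def by (meson atLeastAtMost_iff order_trans)
    have hs: "\<bar>y i s - y' i s\<bar> \<le> D s" using hi[OF s] unfolding D_def .
    have u: "\<bar>intuN N K (mk \<sigma> y) s (y i s) - intuN N K (mk \<sigma> y') s (y' i s)\<bar> \<le> LK * (\<bar>y i s - y' i s\<bar> + D s) * s"
      by (rule kK.diffU[OF g g' s'(1,2) D0[OF s'(1)] hE])
    have v: "\<bar>gradUN N dK (mk \<sigma> y) s (y i s) - gradUN N dK (mk \<sigma> y') s (y' i s)\<bar> \<le> LK' * (\<bar>y i s - y' i s\<bar> + D s) * s"
      unfolding gradUN_eq by (rule kD.diffU[OF g g' s'(1,2) D0[OF s'(1)] hE])
    have u2: "LK * (\<bar>y i s - y' i s\<bar> + D s) * s \<le> LK * (2 * D s) * T"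
      using hs s' kK.L0 D0[OF s'(1)] by (intro mult_mono mult_left_mono) auto
    have v2: "LK' * (\<bar>y i s - y' i s\<bar> + D s) * s \<le> LK' * (2 * D s) * T"
      using hs s' kD.L0 D0[OF s'(1)] by (intro mult_mono mult_left_mono) auto
    have "\<bar>ig \<sigma> y i s - ig \<sigma> y' i s\<bar> \<le> Lb * (\<bar>intuN N K (mk \<sigma> y) s (y i s) - intuN N K (mk \<sigma> y') s (y' i s)\<bar>
        + \<bar>gradUN N dK (mk \<sigma> y) s (y i s) - gradUN N dK (mk \<sigma> y') s (y' i s)\<bar>)"
      unfolding ig_def using intuN_range[OF s'(1,3)] gradUN_range[OF s'(1,3)] by (intro drf_lip) auto
    also have "\<dots> \<le> Lb * (LK * (2 * D s) * T + LK' * (2 * D s) * T)"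
      using u v u2 v2 Lb_nonneg by (intro mult_left_mono) auto
    also have "\<dots> = A * D s" unfolding A_def by (simp add: algebra_simps)
    finally show ?thesis .
  qed
  have ci: "continuous_on {0..t} (ig \<sigma> y i)" by (rule ig_cont[OF g t(1,2) t1(2) cy])
  have ci': "continuous_on {0..t} (ig \<sigma> y' i)" by (rule ig_cont[OF g' t(1,2) t1(2) cy'])
  have cD: "continuous_on {0..t} (\<lambda>s. A * D s)" unfolding D_def by (intro continuous_intros) auto
  have "\<bar>Ig \<sigma> y i t - Ig \<sigma> y' i t\<bar> \<le> set_lebesgue_integral lborel {0..t} (\<lambda>s. A * D s)"
    unfolding Ig_def
    by (rule LINT_diff_bound[OF borel_integrable_atLeastAtMost'[OF ci] borel_integrable_atLeastAtMost'[OF ci']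
          borel_integrable_atLeastAtMost'[OF cD] pt])
  also have "(\<lambda>s. A * D s) = (\<lambda>s. (A * C * Lam ^ n / fact n) * s ^ n)"
    unfolding D_def by (auto simp: fun_eq_iff power_mult_distrib)
  also have "set_lebesgue_integral lborel {0..t} (\<lambda>s. (A * C * Lam ^ n / fact n) * s ^ n) =
      (A * C * Lam ^ n / fact n) * t ^ Suc n / Suc n"
    by (rule LINT_pow[OF t(1)])
  also have "\<dots> = (A * Lam ^ n) * (C * t ^ Suc n / fact (Suc n))"
    by (simp add: field_simps)
  also have "\<dots> \<le> Lam ^ Suc n * (C * t ^ Suc n / fact (Suc n))"
    using A0 C t Lam_ge1 LamA by (intro mult_right_mono) (auto simp: algebra_simps)
  also have "\<dots> = C * (Lam * t) ^ Suc n / fact (Suc n)" by (simp add: power_mult_distrib)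
  finally show ?thesis .
qed

end


lemma pow_fact_lim: "(\<lambda>n. C * (x::real) ^ n / fact n) \<longlonglongrightarrow> 0"
proof -
  have "(\<lambda>n. x ^ n /\<^sub>R fact n) \<longlonglongrightarrow> 0" by (rule summable_LIMSEQ_zero[OF summable_exp_generic])
  then have "(\<lambda>n. C * (x ^ n /\<^sub>R fact n)) \<longlonglongrightarrow> C * 0" by (intro tendsto_mult_left)
  then show ?thesis by (simp add: divide_inverse_commute mult.left_commute)
qed

context ksys
begin

lemma FU:
  assumes t1: "0 \<le> t1" "t1 \<le> T" and sr: "\<And>j. j < N \<Longrightarrow> \<sigma> j \<le> \<rho> j"
    and gy: "good t1 N \<rho> y" and gy': "good t1 N \<rho> y'"
    and ey: "\<And>i t. i < N \<Longrightarrow> t \<in> {0..t1} \<Longrightarrow> ereal t < \<rho> i \<Longrightarrow> y i t = x0 i + Ig \<sigma> y i t + sqrt 2 * w i t"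
    and ey': "\<And>i t. i < N \<Longrightarrow> t \<in> {0..t1} \<Longrightarrow> ereal t < \<rho> i \<Longrightarrow> y' i t = x0 i + Ig \<sigma> y' i t + sqrt 2 * w i t"
    and i: "i < N" and t: "t \<in> {0..t1}" "ereal t < \<rho> i"
  shows "y i t = y' i t"
proof -
  have g: "good t1 N \<sigma> y" and g': "good t1 N \<sigma> y'" using good_mono[OF gy sr] good_mono[OF gy' sr] by auto
  define C0 where "C0 = 2 * Cb * T"
  have C0: "0 \<le> C0" unfolding C0_def using Cb_nonneg T_pos by simp
  have dif: "y j r - y' j r = Ig \<sigma> y j r - Ig \<sigma> y' j r" if "j < N" "r \<in> {0..t1}" "ereal r < \<rho> j" for j r
    using ey[OF that] ey'[OF that] by simp
  have claim: "\<forall>j r. j < N \<longrightarrow> r \<in> {0..t1} \<longrightarrow> ereal r < \<rho> j \<longrightarrow> \<bar>y j r - y' j r\<bar> \<le> C0 * (Lam * r) ^ n / fact n" for n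
  proof (induction n)
    case 0
    show ?case
    proof (intro allI impI)
      fix j r assume a: "j < N" "r \<in> {0..t1}" "ereal r < \<rho> j"
      have "\<bar>Ig \<sigma> y j r\<bar> \<le> Cb * r" "\<bar>Ig \<sigma> y' j r\<bar> \<le> Cb * r" using Ig_bound a(2) t1 by auto
      moreover have "Cb * r \<le> Cb * T" using Cb_nonneg a(2) t1 by (intro mult_left_mono) auto
      ultimately show "\<bar>y j r - y' j r\<bar> \<le> C0 * (Lam * r) ^ 0 / fact 0"
        using dif[OF a] unfolding C0_def by simp
    qed
  next
    case (Suc n)
    show ?case
    proof (intro allI impI)
      fix j r assume a: "j < N" "r \<in> {0..t1}" "ereal r < \<rho> j"
      have sub: "{0..r} \<subseteq> {r'. 0 \<le> r' \<and> r' \<le> t1 \<and> ereal r' < \<rho> j}"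
      proof
        fix x assume x: "x \<in> {0..r}"
        then have "ereal x \<le> ereal r" by simp
        then have "ereal x < \<rho> j" using a(3) by (rule order.strict_trans1)
        then show "x \<in> {r'. 0 \<le> r' \<and> r' \<le> t1 \<and> ereal r' < \<rho> j}" using a x by auto
      qed
      have cy: "continuous_on {0..r} (y j)"
        by (rule continuous_on_subset[OF _ sub]) (use gy a in \<open>auto simp: good_def\<close>)
      have cy': "continuous_on {0..r} (y' j)"
        by (rule continuous_on_subset[OF _ sub]) (use gy' a in \<open>auto simp: good_def\<close>)
      have "\<bar>Ig \<sigma> y j r - Ig \<sigma> y' j r\<bar> \<le> C0 * (Lam * r) ^ Suc n / fact (Suc n)"
      proof (rule step[OF t1 g g' _ _ cy cy' C0])
        show "0 \<le> r" "r \<le> t1" using a by auto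
      next
        fix k r' assume k: "k < N" "r' \<in> {0..r}" "ereal r' < \<sigma> k"
        then have "ereal r' < \<rho> k" using sr[OF k(1)] by auto
        moreover have "r' \<in> {0..t1}" using k a by auto
        ultimately show "\<bar>y k r' - y' k r'\<bar> \<le> C0 * (Lam * r') ^ n / fact n" using Suc.IH k by blast
      next
        fix s assume s: "s \<in> {0..r}"
        then have "s \<in> {0..t1}" "ereal s < \<rho> j" using sub by auto
        then show "\<bar>y j s - y' j s\<bar> \<le> C0 * (Lam * s) ^ n / fact n" using Suc.IH a by blast
      qed
      then show "\<bar>y j r - y' j r\<bar> \<le> C0 * (Lam * r) ^ Suc n / fact (Suc n)" using dif[OF a] by simp
    qed
  qed
  have "\<bar>y i t - y' i t\<bar> \<le> 0"
    by (rule LIMSEQ_le_const[OF pow_fact_lim[of C0 "Lam * t"]]) (use claim i t in blast)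
  then show ?thesis by simp
qed

end


context ksys
begin

definition Phi :: "(nat \<Rightarrow> real) \<Rightarrow> (nat \<Rightarrow> real \<Rightarrow> real) \<Rightarrow> (nat \<Rightarrow> ereal) \<Rightarrow> (nat \<Rightarrow> real \<Rightarrow> real) \<Rightarrow> nat \<Rightarrow> real \<Rightarrow> real" where
  "Phi x0 w \<sigma> y = (\<lambda>i t. x0 i + Ig \<sigma> y i t + sqrt 2 * w i t)"

definition Pic :: "(nat \<Rightarrow> real) \<Rightarrow> (nat \<Rightarrow> real \<Rightarrow> real) \<Rightarrow> (nat \<Rightarrow> ereal) \<Rightarrow> nat \<Rightarrow> nat \<Rightarrow> real \<Rightarrow> real" where
  "Pic x0 w \<sigma> n = (Phi x0 w \<sigma> ^^ n) (\<lambda>i t. 0)"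

definition ysol :: "(nat \<Rightarrow> real) \<Rightarrow> (nat \<Rightarrow> real \<Rightarrow> real) \<Rightarrow> (nat \<Rightarrow> ereal) \<Rightarrow> nat \<Rightarrow> real \<Rightarrow> real" where
  "ysol x0 w \<sigma> i t = lim (\<lambda>n. Pic x0 w \<sigma> n i t)"

lemma Pic_0: "Pic x0 w \<sigma> 0 = (\<lambda>i t. 0)" by (simp add: Pic_def)
lemma Pic_Suc: "Pic x0 w \<sigma> (Suc n) = Phi x0 w \<sigma> (Pic x0 w \<sigma> n)" by (simp add: Pic_def)

lemma good_of_cont: "(\<And>j. j < N \<Longrightarrow> continuous_on {0..T} (y j)) \<Longrightarrow> good T N \<sigma> y"
  unfolding good_def
  by (intro allI impI, rule continuous_on_subset[of "{0..T}"]) auto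

lemma Ig_cont:
  assumes c: "\<And>j. j < N \<Longrightarrow> continuous_on {0..T} (y j)" and i: "i < N"
  shows "continuous_on {0..T} (Ig \<sigma> y i)"
proof -
  have ci: "continuous_on {0..T} (ig \<sigma> y i)"
    by (rule ig_cont[OF good_of_cont[OF c]]) (use T_pos c i in auto)
  have m: "mb T (ig \<sigma> y i)" by (rule mb_cont[OF ci])
  have "continuous_on {0..T} (\<lambda>t. integral {0..t} (ig \<sigma> y i))"
    by (rule indefinite_integral_continuous_1) (rule mb_HK(2)[OF m], use T_pos in auto)
  moreover have eq: "\<And>t. t \<in> {0..T} \<Longrightarrow> Ig \<sigma> y i t = integral {0..t} (ig \<sigma> y i)"
    unfolding Ig_def using mb_HK(1)[OF m] by auto
  moreover have "continuous_on {0..T} (Ig \<sigma> y i) = continuous_on {0..T} (\<lambda>t. integral {0..t} (ig \<sigma> y i))"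
    by (rule continuous_on_cong) (auto simp: eq)
  ultimately show ?thesis by simp
qed

context
  fixes x0 :: "nat \<Rightarrow> real" and w :: "nat \<Rightarrow> real \<Rightarrow> real" and \<sigma> :: "nat \<Rightarrow> ereal"
  assumes wc: "\<And>i. i < N \<Longrightarrow> continuous_on {0..T} (w i)"
begin

lemma Pic_cont: "j < N \<Longrightarrow> continuous_on {0..T} (Pic x0 w \<sigma> n j)"
proof (induction n arbitrary: j)
  case 0 then show ?case by (simp add: Pic_0)
next
  case (Suc n)
  have "continuous_on {0..T} (\<lambda>t. x0 j + Ig \<sigma> (Pic x0 w \<sigma> n) j t + sqrt 2 * w j t)"
    by (rule continuous_on_add[OF continuous_on_add[OF continuous_on_const Ig_cont[OF Suc.IH Suc.prems]]
          continuous_on_mult_left[OF wc[OF Suc.prems]]])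
  then show ?case unfolding Pic_Suc Phi_def .
qed

lemma w_bound: obtains Bw where "0 \<le> Bw" "\<And>i t. i < N \<Longrightarrow> t \<in> {0..T} \<Longrightarrow> \<bar>w i t\<bar> \<le> Bw"
proof -
  have "\<forall>i\<in>{..<N}. \<exists>B. 0 \<le> B \<and> (\<forall>t\<in>{0..T}. \<bar>w i t\<bar> \<le> B)"
  proof
    fix i assume "i \<in> {..<N}"
    then have "continuous_on {0..T} (w i)" using wc by auto
    then have "bounded (w i ` {0..T})" by (rule compact_imp_bounded[OF compact_continuous_image[OF _ compact_Icc]])
    then obtain B where "\<forall>t\<in>{0..T}. norm (w i t) \<le> B"
      unfolding bounded_iff by auto
    then show "\<exists>B. 0 \<le> B \<and> (\<forall>t\<in>{0..T}. \<bar>w i t\<bar> \<le> B)"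
      by (intro exI[of _ "max 0 B"]) auto
  qed
  then obtain Bf where Bf: "\<forall>i\<in>{..<N}. 0 \<le> Bf i \<and> (\<forall>t\<in>{0..T}. \<bar>w i t\<bar> \<le> Bf i)"
    by metis
  show ?thesis
  proof (rule that[of "\<Sum>i<N. Bf i"])
    show "0 \<le> (\<Sum>i<N. Bf i)" using Bf by (auto intro: sum_nonneg)
  next
    fix i t assume it: "i < N" "t \<in> {0..T}"
    have "\<bar>w i t\<bar> \<le> Bf i" using Bf it by auto
    also have "Bf i \<le> (\<Sum>i<N. Bf i)"
      by (rule member_le_sum) (use Bf it in auto)
    finally show "\<bar>w i t\<bar> \<le> (\<Sum>i<N. Bf i)" .
  qed
qed

lemma Pic_diff: obtains C1 where "0 \<le> C1"
  "\<And>n i t. i < N \<Longrightarrow> t \<in> {0..T} \<Longrightarrow>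
      \<bar>Pic x0 w \<sigma> (Suc n) i t - Pic x0 w \<sigma> n i t\<bar> \<le> C1 * (Lam * t) ^ n / fact n"
proof -
  obtain Bw where Bw: "0 \<le> Bw" "\<And>i t. i < N \<Longrightarrow> t \<in> {0..T} \<Longrightarrow> \<bar>w i t\<bar> \<le> Bw" by (rule w_bound) auto
  define C1 where "C1 = (\<Sum>i<N. \<bar>x0 i\<bar>) + Cb * T + sqrt 2 * Bw"
  have C1: "0 \<le> C1" unfolding C1_def using Bw Cb_nonneg T_pos by (auto intro!: add_nonneg_nonneg sum_nonneg)
  have base: "\<bar>Pic x0 w \<sigma> (Suc 0) i t - Pic x0 w \<sigma> 0 i t\<bar> \<le> C1" if it: "i < N" "t \<in> {0..T}" for i t
  proof -
    have "\<bar>x0 i\<bar> \<le> (\<Sum>i<N. \<bar>x0 i\<bar>)" by (rule member_le_sum) (use it in auto)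
    moreover have "\<bar>Ig \<sigma> (\<lambda>i t. 0) i t\<bar> \<le> Cb * T"
    proof -
      have "\<bar>Ig \<sigma> (\<lambda>i t. 0) i t\<bar> \<le> Cb * t" using Ig_bound[of t] it by auto
      moreover have "Cb * t \<le> Cb * T" using it Cb_nonneg by (intro mult_left_mono) auto
      ultimately show ?thesis by linarith
    qed
    moreover have "\<bar>sqrt 2 * w i t\<bar> \<le> sqrt 2 * Bw" using Bw(2)[OF it] by (simp add: abs_mult)
    ultimately show ?thesis unfolding Pic_Suc Pic_0 Phi_def C1_def by linarith
  qed
  have main: "\<forall>i t. i < N \<longrightarrow> t \<in> {0..T} \<longrightarrow> \<bar>Pic x0 w \<sigma> (Suc n) i t - Pic x0 w \<sigma> n i t\<bar> \<le> C1 * (Lam * t) ^ n / fact n" for n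
  proof (induction n)
    case 0 then show ?case using base by simp
  next
    case (Suc n)
    show ?case
    proof (intro allI impI)
      fix i t assume it: "i < N" "t \<in> {0..T}"
      have c1: "\<And>j. j < N \<Longrightarrow> continuous_on {0..T} (Pic x0 w \<sigma> (Suc n) j)"
        by (rule Pic_cont)
      have c0: "\<And>j. j < N \<Longrightarrow> continuous_on {0..T} (Pic x0 w \<sigma> n j)" by (rule Pic_cont)
      have "\<bar>Ig \<sigma> (Pic x0 w \<sigma> (Suc n)) i t - Ig \<sigma> (Pic x0 w \<sigma> n) i t\<bar> \<le> C1 * (Lam * t) ^ Suc n / fact (Suc n)"
      proof (rule step[OF _ _ good_of_cont[OF c1] good_of_cont[OF c0] _ _ _ _ C1])
        show "0 \<le> T" "T \<le> T" "0 \<le> t" "t \<le> T" using T_pos it by auto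
        show "continuous_on {0..t} (Pic x0 w \<sigma> (Suc n) i)" "continuous_on {0..t} (Pic x0 w \<sigma> n i)"
          using c1[OF it(1)] c0[OF it(1)] it by (auto elim!: continuous_on_subset)
      next
        fix j r assume "j < N" "r \<in> {0..t}"
        then show "\<bar>Pic x0 w \<sigma> (Suc n) j r - Pic x0 w \<sigma> n j r\<bar> \<le> C1 * (Lam * r) ^ n / fact n"
          using Suc.IH it by auto
      next
        fix s assume "s \<in> {0..t}"
        then show "\<bar>Pic x0 w \<sigma> (Suc n) i s - Pic x0 w \<sigma> n i s\<bar> \<le> C1 * (Lam * s) ^ n / fact n"
          using Suc.IH it by auto
      qed
      then show "\<bar>Pic x0 w \<sigma> (Suc (Suc n)) i t - Pic x0 w \<sigma> (Suc n) i t\<bar> \<le> C1 * (Lam * t) ^ Suc n / fact (Suc n)"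
        unfolding Pic_Suc[of _ _ _ "Suc n"] Pic_Suc[of _ _ _ n] Phi_def by simp
    qed
  qed
  show ?thesis using that C1 main by blast
qed

lemma Pic_unif:
  assumes i: "i < N"
  shows "uniform_limit {0..T} (\<lambda>n. Pic x0 w \<sigma> n i) (ysol x0 w \<sigma> i) sequentially"
proof -
  obtain C1 where C1: "0 \<le> C1"
    "\<And>n i t. i < N \<Longrightarrow> t \<in> {0..T} \<Longrightarrow> \<bar>Pic x0 w \<sigma> (Suc n) i t - Pic x0 w \<sigma> n i t\<bar> \<le> C1 * (Lam * t) ^ n / fact n"
    by (rule Pic_diff) auto
  define d where "d k t = Pic x0 w \<sigma> (Suc k) i t - Pic x0 w \<sigma> k i t" for k t
  have tel: "Pic x0 w \<sigma> n i t = (\<Sum>k<n. d k t)" for n t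
    unfolding d_def by (induction n) (auto simp: Pic_0)
  have bd: "norm (d k t) \<le> C1 * (Lam * T) ^ k / fact k" if "t \<in> {0..T}" for k t
  proof -
    have "norm (d k t) \<le> C1 * (Lam * t) ^ k / fact k" using C1(2)[OF i that] by (simp add: d_def)
    also have "\<dots> \<le> C1 * (Lam * T) ^ k / fact k"
      using that C1(1) Lam_ge1 by (intro divide_right_mono mult_left_mono power_mono mult_left_mono) auto
    finally show ?thesis .
  qed
  have sm: "summable (\<lambda>k. C1 * (Lam * T) ^ k / fact k)"
    using summable_mult[OF summable_exp_generic[of "Lam * T"], of C1]
    by (simp add: divide_inverse_commute mult.left_commute)
  have ul: "uniform_limit {0..T} (\<lambda>n t. \<Sum>k<n. d k t) (\<lambda>t. \<Sum>k. d k t) sequentially"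
    by (rule Weierstrass_m_test[OF bd sm])
  have lim: "ysol x0 w \<sigma> i t = (\<Sum>k. d k t)" if "t \<in> {0..T}" for t
  proof -
    have "(\<lambda>n. \<Sum>k<n. d k t) \<longlonglongrightarrow> (\<Sum>k. d k t)" by (rule tendsto_uniform_limitI[OF ul that])
    then have "(\<lambda>n. Pic x0 w \<sigma> n i t) \<longlonglongrightarrow> (\<Sum>k. d k t)" by (simp add: tel)
    then show ?thesis unfolding ysol_def by (rule limI)
  qed
  show ?thesis
    using ul by (rule uniform_limit_cong'[THEN iffD1, rotated -1]) (auto simp: lim tel)
qed

end

end


context ksys
begin

context
  fixes x0 :: "nat \<Rightarrow> real" and w :: "nat \<Rightarrow> real \<Rightarrow> real" and \<sigma> :: "nat \<Rightarrow> ereal"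
  assumes wc: "\<And>i. i < N \<Longrightarrow> continuous_on {0..T} (w i)"
begin

lemma ysol_cont: "i < N \<Longrightarrow> continuous_on {0..T} (ysol x0 w \<sigma> i)"
  by (rule uniform_limit_theorem[OF _ Pic_unif[OF wc]]) (auto intro!: always_eventually Pic_cont[OF wc])

lemma ysol_lim: "i < N \<Longrightarrow> t \<in> {0..T} \<Longrightarrow> (\<lambda>n. Pic x0 w \<sigma> n i t) \<longlonglongrightarrow> ysol x0 w \<sigma> i t"
  by (rule tendsto_uniform_limitI[OF Pic_unif[OF wc]])

lemma ysol_fix:
  assumes i: "i < N" and t: "t \<in> {0..T}"
  shows "ysol x0 w \<sigma> i t = x0 i + Ig \<sigma> (ysol x0 w \<sigma>) i t + sqrt 2 * w i t"
proof -
  let ?P = "Pic x0 w \<sigma>" and ?y = "ysol x0 w \<sigma>"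
  have cy: "\<And>j. j < N \<Longrightarrow> continuous_on {0..T} (?y j)" by (rule ysol_cont)
  have cP: "\<And>j n. j < N \<Longrightarrow> continuous_on {0..T} (?P n j)" by (rule Pic_cont[OF wc])
  have conv: "(\<lambda>n. Ig \<sigma> (?P n) i t) \<longlonglongrightarrow> Ig \<sigma> ?y i t"
  proof (rule LIMSEQ_I)
    fix e :: real assume e: "0 < e"
    define \<epsilon> where "\<epsilon> = e / (2 * (Lam * T + 1))"
    have LT: "0 < Lam * T + 1" using Lam_ge1 T_pos by (simp add: add_pos_nonneg)
    have \<epsilon>: "0 < \<epsilon>" unfolding \<epsilon>_def using e LT by simp
    have ev: "eventually (\<lambda>n. \<forall>j\<in>{..<N}. \<forall>r\<in>{0..T}. dist (?P n j r) (?y j r) < \<epsilon>) sequentially"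
      by (rule eventually_ball_finite) (use uniform_limitD[OF Pic_unif[OF wc] \<epsilon>] in auto)
    then obtain n0 where n0: "\<And>n. n \<ge> n0 \<Longrightarrow> \<forall>j\<in>{..<N}. \<forall>r\<in>{0..T}. dist (?P n j r) (?y j r) < \<epsilon>"
      unfolding eventually_sequentially by blast
    show "\<exists>no. \<forall>n\<ge>no. norm (Ig \<sigma> (?P n) i t - Ig \<sigma> ?y i t) < e"
    proof (intro exI allI impI)
      fix n assume n: "n \<ge> n0"
      have bd: "\<And>j r. j < N \<Longrightarrow> r \<in> {0..T} \<Longrightarrow> \<bar>?P n j r - ?y j r\<bar> \<le> \<epsilon>"
        using n0[OF n] by (auto simp: dist_real_def intro: less_imp_le)
      have "\<bar>Ig \<sigma> (?P n) i t - Ig \<sigma> ?y i t\<bar> \<le> \<epsilon> * (Lam * t) ^ Suc 0 / fact (Suc 0)"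
      proof (rule step[OF _ _ good_of_cont[OF cP] good_of_cont[OF cy]])
        show "0 \<le> T" "T \<le> T" "0 \<le> t" "t \<le> T" "0 \<le> \<epsilon>" using T_pos t \<epsilon> by auto
        show "continuous_on {0..t} (?P n i)" "continuous_on {0..t} (?y i)"
          using t by (auto intro: continuous_on_subset[OF cP[OF i]] continuous_on_subset[OF cy[OF i]])
      next
        fix j r assume "j < N" "r \<in> {0..t}" then show "\<bar>?P n j r - ?y j r\<bar> \<le> \<epsilon> * (Lam * r) ^ 0 / fact 0"
          using bd t by auto
      next
        fix s assume "s \<in> {0..t}" then show "\<bar>?P n i s - ?y i s\<bar> \<le> \<epsilon> * (Lam * s) ^ 0 / fact 0"
          using bd t i by auto
      qed
      also have "\<dots> = \<epsilon> * (Lam * t)" by simp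
      also have "\<dots> \<le> \<epsilon> * (Lam * T + 1)"
        using \<epsilon> t Lam_ge1 by (intro mult_left_mono) (auto intro: order_trans[OF mult_left_mono[of t T Lam]])
      also have "\<dots> = e / 2" unfolding \<epsilon>_def using LT by (simp add: field_simps)
      also have "\<dots> < e" using e by simp
      finally show "norm (Ig \<sigma> (?P n) i t - Ig \<sigma> ?y i t) < e" by simp
    qed
  qed
  have "(\<lambda>n. ?P (Suc n) i t) \<longlonglongrightarrow> x0 i + Ig \<sigma> ?y i t + sqrt 2 * w i t"
    unfolding Pic_Suc Phi_def by (intro tendsto_intros conv)
  moreover have "(\<lambda>n. ?P (Suc n) i t) \<longlonglongrightarrow> ?y i t" by (rule LIMSEQ_Suc[OF ysol_lim[OF i t]])
  ultimately show ?thesis using LIMSEQ_unique by blast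
qed

end

end


context ksys
begin

definition kint :: "(nat \<Rightarrow> real \<Rightarrow> real option) \<Rightarrow> nat \<Rightarrow> real \<Rightarrow> real" where
  "kint \<xi> i = (\<lambda>s. lam * c0 * exp (- lam * ext0 (intuN N K \<xi> s) (\<xi> i s)))"

definition kA :: "(nat \<Rightarrow> real \<Rightarrow> real option) \<Rightarrow> nat \<Rightarrow> real \<Rightarrow> real" where
  "kA \<xi> i c = set_lebesgue_integral lborel {0..c} (kint \<xi> i)"

definition kS :: "real \<Rightarrow> (nat \<Rightarrow> real \<Rightarrow> real option) \<Rightarrow> nat \<Rightarrow> real set" where
  "kS z \<xi> i = {c. 0 \<le> c \<and> c \<le> T \<and> z \<le> kA \<xi> i c}"

lemma kill_time_kS: "kill_time T N K lam c0 z \<xi> i = Inf (ereal ` kS z \<xi> i)"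
  unfolding kill_time_def kS_def kA_def kint_def by (simp add: image_def) (metis)

lemma kint_mk: "kint (mk \<sigma> y) i s =
    (if ereal s < \<sigma> i then lam * c0 * exp (- lam * intuN N K (mk \<sigma> y) s (y i s)) else lam * c0)"
  unfolding kint_def by (simp add: ext0_mk)

lemma mb_kint:
  assumes g: "good T N \<sigma> y" and i: "i < N"
  shows "mb T (kint (mk \<sigma> y) i)"
  unfolding kint_mk[abs_def]
proof (rule mb_pw)
  have cy: "continuous_on {r. 0 \<le> r \<and> r \<le> T \<and> ereal r < \<sigma> i} (y i)" using g i by (auto simp: good_def)
  have "continuous_on {r. 0 \<le> r \<and> r \<le> T \<and> ereal r < \<sigma> i} (\<lambda>s. intuN N K (mk \<sigma> y) s (y i s))"
    by (rule continuous_on_compose2[OF kK.intuN_cont2[OF g], of _ "\<lambda>s. (s, y i s)", simplified])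
       (auto intro!: continuous_intros cy)
  then show "continuous_on {r. 0 \<le> r \<and> r \<le> T \<and> ereal r < \<sigma> i} (\<lambda>s. lam * c0 * exp (- lam * intuN N K (mk \<sigma> y) s (y i s)))"
    by (intro continuous_intros)
  show "continuous_on {0..T} (\<lambda>s. lam * c0)" by (rule continuous_on_const)
  fix r assume r: "r \<in> {0..T}"
  have "intuN N K (mk \<sigma> y) r (y i r) \<ge> 0" using intuN_range r by auto
  then have "exp (- lam * intuN N K (mk \<sigma> y) r (y i r)) \<le> 1" using lam_pos by simp
  then show "\<bar>if ereal r < \<sigma> i then lam * c0 * exp (- lam * intuN N K (mk \<sigma> y) r (y i r)) else lam * c0\<bar> \<le> lam * c0"
    using lam_pos c0_pos by (auto simp: abs_mult intro: mult_left_mono[of _ 1, simplified])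
qed

lemma kint_nonneg: "0 \<le> kint \<xi> i s"
  unfolding kint_def using lam_pos c0_pos by simp

lemma kA_cont:
  assumes g: "good T N \<sigma> y" and i: "i < N"
  shows "continuous_on {0..T} (kA (mk \<sigma> y) i)"
proof -
  have m: "mb T (kint (mk \<sigma> y) i)" by (rule mb_kint[OF g i])
  have cont: "continuous_on {0..T} (\<lambda>t. integral {0..t} (kint (mk \<sigma> y) i))"
    by (rule indefinite_integral_continuous_1) (rule mb_HK(2)[OF m], use T_pos in auto)
  have eq: "\<And>t. t \<in> {0..T} \<Longrightarrow> kA (mk \<sigma> y) i t = integral {0..t} (kint (mk \<sigma> y) i)"
    unfolding kA_def using mb_HK(1)[OF m] by auto
  have "continuous_on {0..T} (kA (mk \<sigma> y) i) = continuous_on {0..T} (\<lambda>t. integral {0..t} (kint (mk \<sigma> y) i))"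
    by (rule continuous_on_cong) (auto simp: eq)
  with cont show ?thesis by simp
qed

lemma kA_mono:
  assumes g: "good T N \<sigma> y" and i: "i < N" and c: "0 \<le> c" "c \<le> c'" "c' \<le> T"
  shows "kA (mk \<sigma> y) i c \<le> kA (mk \<sigma> y) i c'"
proof -
  have m: "mb T (kint (mk \<sigma> y) i)" by (rule mb_kint[OF g i])
  let ?f = "kint (mk \<sigma> y) i"
  have "kA (mk \<sigma> y) i c' = integral {0..c'} ?f" unfolding kA_def using mb_HK[OF m] c by auto
  also have "\<dots> = integral {0..c} ?f + integral {c..c'} ?f"
    by (rule Henstock_Kurzweil_Integration.integral_combine[symmetric]) (use mb_HK[OF m] c in auto)
  also have "integral {0..c} ?f = kA (mk \<sigma> y) i c" unfolding kA_def using mb_HK[OF m] c by auto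
  also have "integral {c..c'} ?f = set_lebesgue_integral lborel {c..c'} ?f" using mb_HK[OF m] c by auto
  also have "0 \<le> set_lebesgue_integral lborel {c..c'} ?f" by (rule LINT_nonneg) (rule kint_nonneg)
  ultimately show ?thesis by simp
qed

lemma kS_closed:
  assumes g: "good T N \<sigma> y" and i: "i < N"
  shows "closed (kS z (mk \<sigma> y) i)"
proof -
  have "closed {c \<in> {0..T}. (\<lambda>_. z) c \<le> kA (mk \<sigma> y) i c}"
    by (rule continuous_on_closed_Collect_le[OF continuous_on_const kA_cont[OF g i] closed_atLeastAtMost])
  moreover have "{c \<in> {0..T}. (\<lambda>_. z) c \<le> kA (mk \<sigma> y) i c} = kS z (mk \<sigma> y) i"
    unfolding kS_def by auto
  ultimately show ?thesis by simp
qed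

lemma KT_val:
  assumes g: "good T N \<sigma> y" and i: "i < N"
  shows "(kS z (mk \<sigma> y) i = {} \<and> kill_time T N K lam c0 z (mk \<sigma> y) i = \<infinity>) \<or>
         (kS z (mk \<sigma> y) i \<noteq> {} \<and> Inf (kS z (mk \<sigma> y) i) \<in> kS z (mk \<sigma> y) i \<and>
          kill_time T N K lam c0 z (mk \<sigma> y) i = ereal (Inf (kS z (mk \<sigma> y) i)))"
proof (cases "kS z (mk \<sigma> y) i = {}")
  case True then show ?thesis by (simp add: kill_time_kS top_ereal_def)
next
  case False
  let ?S = "kS z (mk \<sigma> y) i"
  have bdd: "bdd_below ?S" unfolding kS_def by (auto intro: bdd_belowI[of _ 0])
  have inS: "Inf ?S \<in> ?S" by (rule closed_contains_Inf[OF False bdd kS_closed[OF g i]])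
  have "Inf (ereal ` ?S) = ereal (Inf ?S)"
  proof (rule antisym)
    show "Inf (ereal ` ?S) \<le> ereal (Inf ?S)" using inS by (auto intro: Inf_lower)
    show "ereal (Inf ?S) \<le> Inf (ereal ` ?S)"
      by (rule Inf_greatest) (auto intro: cInf_lower[OF _ bdd])
  qed
  then show ?thesis using False inS by (simp add: kill_time_kS)
qed

lemma KT1:
  assumes g: "good T N \<sigma> y" and i: "i < N" and c: "0 \<le> c" "c \<le> T"
  shows "kill_time T N K lam c0 z (mk \<sigma> y) i \<le> ereal c \<longleftrightarrow> z \<le> kA (mk \<sigma> y) i c"
proof
  assume "z \<le> kA (mk \<sigma> y) i c"
  then have "c \<in> kS z (mk \<sigma> y) i" using c unfolding kS_def by auto
  then show "kill_time T N K lam c0 z (mk \<sigma> y) i \<le> ereal c" unfolding kill_time_kS by (auto intro: Inf_lower)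
next
  assume a: "kill_time T N K lam c0 z (mk \<sigma> y) i \<le> ereal c"
  from KT_val[OF g i, of z] show "z \<le> kA (mk \<sigma> y) i c"
  proof
    assume "kS z (mk \<sigma> y) i = {} \<and> kill_time T N K lam c0 z (mk \<sigma> y) i = \<infinity>"
    then show ?thesis using a by simp
  next
    assume h: "kS z (mk \<sigma> y) i \<noteq> {} \<and> Inf (kS z (mk \<sigma> y) i) \<in> kS z (mk \<sigma> y) i \<and>
          kill_time T N K lam c0 z (mk \<sigma> y) i = ereal (Inf (kS z (mk \<sigma> y) i))"
    let ?c = "Inf (kS z (mk \<sigma> y) i)"
    have "?c \<le> c" using h a by simp
    moreover have "z \<le> kA (mk \<sigma> y) i ?c" "0 \<le> ?c" using h unfolding kS_def by auto
    ultimately show ?thesis using kA_mono[OF g i, of ?c c] c by linarith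
  qed
qed

lemma KT_range:
  assumes g: "good T N \<sigma> y" and i: "i < N"
  shows "kill_time T N K lam c0 z (mk \<sigma> y) i = \<infinity> \<or>
    (\<exists>c. 0 \<le> c \<and> c \<le> T \<and> kill_time T N K lam c0 z (mk \<sigma> y) i = ereal c)"
  using KT_val[OF g i, of z] unfolding kS_def by auto

end


lemma intuN_cong:
  assumes "\<And>j r. j < N \<Longrightarrow> r \<in> {0..s} \<Longrightarrow> \<xi> j r = \<xi>' j r"
  shows "intuN N \<kappa> \<xi> s x = intuN N \<kappa> \<xi>' s x"
  unfolding intuN_def uN_def
  by (rule set_lebesgue_integral_cong) (auto simp: assms)

lemma mb_spike:
  assumes "mb T f" "mb T g" "0 \<le> c" "c \<le> T" "\<And>s. 0 \<le> s \<Longrightarrow> s < c \<Longrightarrow> f s = g s"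
  shows "set_lebesgue_integral lborel {0..c} f = set_lebesgue_integral lborel {0..c} g"
proof -
  have "set_lebesgue_integral lborel {0..c} f = integral {0..c} f" using mb_HK[OF assms(1)] assms by auto
  also have "\<dots> = integral {0..c} g"
    by (rule integral_spike[of "{c}"]) (use assms(5) in auto)
  also have "\<dots> = set_lebesgue_integral lborel {0..c} g" using mb_HK[OF assms(2)] assms by auto
  finally show ?thesis .
qed

lemma mk_cong:
  assumes "ereal r < \<sigma> j \<longleftrightarrow> ereal r < \<sigma>' j" "ereal r < \<sigma> j \<Longrightarrow> y j r = y' j r"
  shows "mk \<sigma> y j r = mk \<sigma>' y' j r"
  using assms by (simp add: mk_def)

context ksys
begin

lemma ig_cong:
  assumes "\<And>j r. j < N \<Longrightarrow> r \<in> {0..s} \<Longrightarrow> mk \<sigma> y j r = mk \<sigma>' y' j r" "y i s = y' i s"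
  shows "ig \<sigma> y i s = ig \<sigma>' y' i s"
  unfolding ig_def gradUN_eq using assms intuN_cong[of N s "mk \<sigma> y" "mk \<sigma>' y'"] by simp

lemma Ig_cong:
  assumes "\<And>j r. j < N \<Longrightarrow> r \<in> {0..t} \<Longrightarrow> mk \<sigma> y j r = mk \<sigma>' y' j r" "\<And>s. s \<in> {0..t} \<Longrightarrow> y i s = y' i s"
  shows "Ig \<sigma> y i t = Ig \<sigma>' y' i t"
  unfolding Ig_def
  by (rule set_lebesgue_integral_cong) (auto intro!: ig_cong assms)

lemma kint_cong:
  assumes "\<And>j r. j < N \<Longrightarrow> r \<in> {0..s} \<Longrightarrow> \<xi> j r = \<xi>' j r" "i < N" "0 \<le> s"
  shows "kint \<xi> i s = kint \<xi>' i s"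
proof -
  have "\<xi> i s = \<xi>' i s" using assms by auto
  moreover have "intuN N K \<xi> s = intuN N K \<xi>' s" using assms intuN_cong[of N s \<xi> \<xi>'] by auto
  ultimately show ?thesis unfolding kint_def by simp
qed

lemma kA_cong:
  assumes "\<And>j r. j < N \<Longrightarrow> r \<in> {0..c} \<Longrightarrow> \<xi> j r = \<xi>' j r" "i < N"
  shows "kA \<xi> i c = kA \<xi>' i c"
  unfolding kA_def
  by (rule set_lebesgue_integral_cong) (auto intro!: kint_cong assms)

lemma kill_time_cong:
  assumes "\<And>j r. j < N \<Longrightarrow> r \<in> {0..T} \<Longrightarrow> \<xi> j r = \<xi>' j r" "i < N"
  shows "kill_time T N K lam c0 z \<xi> i = kill_time T N K lam c0 z \<xi>' i"
proof -
  have "kS z \<xi> i = kS z \<xi>' i"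
    unfolding kS_def using kA_cong[of _ \<xi> \<xi>' i] assms by force
  then show ?thesis by (simp add: kill_time_kS)
qed

lemma kA_spike:
  assumes g: "good T N \<sigma> y" and g': "good T N \<sigma>' y'" and i: "i < N" and c: "0 \<le> c" "c \<le> T"
    and eq: "\<And>j r. j < N \<Longrightarrow> 0 \<le> r \<Longrightarrow> r < c \<Longrightarrow> mk \<sigma> y j r = mk \<sigma>' y' j r"
  shows "kA (mk \<sigma> y) i c = kA (mk \<sigma>' y') i c"
  unfolding kA_def
proof (rule mb_spike[OF mb_kint[OF g i] mb_kint[OF g' i] c])
  fix s assume s: "0 \<le> s" "s < c"
  show "kint (mk \<sigma> y) i s = kint (mk \<sigma>' y') i s" by (rule kint_cong) (use eq s i in auto)
qed

lemma KT_causal: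
  assumes g: "good T N \<sigma> y" and g': "good T N \<sigma>' y'" and i: "i < N" and t: "0 \<le> t" "t \<le> T"
    and eq: "\<And>j r. j < N \<Longrightarrow> 0 \<le> r \<Longrightarrow> r < t \<Longrightarrow> mk \<sigma> y j r = mk \<sigma>' y' j r"
    and le: "kill_time T N K lam c0 z (mk \<sigma> y) i \<le> ereal t"
  shows "kill_time T N K lam c0 z (mk \<sigma>' y') i = kill_time T N K lam c0 z (mk \<sigma> y) i"
proof -
  have kAeq: "kA (mk \<sigma> y) i c = kA (mk \<sigma>' y') i c" if "0 \<le> c" "c \<le> t" for c
    by (rule kA_spike[OF g g' i]) (use that t eq in auto)
  obtain c where c: "0 \<le> c" "c \<le> T" "kill_time T N K lam c0 z (mk \<sigma> y) i = ereal c"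
    using KT_range[OF g i, of z] le by auto
  have ct: "c \<le> t" using c le by simp
  have "z \<le> kA (mk \<sigma> y) i c" using KT1[OF g i c(1,2), of z] c(3) by simp
  then have "z \<le> kA (mk \<sigma>' y') i c" using kAeq[OF c(1) ct] by simp
  then have le': "kill_time T N K lam c0 z (mk \<sigma>' y') i \<le> ereal c" using KT1[OF g' i c(1,2)] by simp
  obtain c' where c': "0 \<le> c'" "c' \<le> T" "kill_time T N K lam c0 z (mk \<sigma>' y') i = ereal c'"
    using KT_range[OF g' i, of z] le' by auto
  have "c' \<le> c" using le' c' by simp
  have "z \<le> kA (mk \<sigma>' y') i c'" using KT1[OF g' i c'(1,2), of z] c'(3) by simp
  then have "z \<le> kA (mk \<sigma> y) i c'" using kAeq[of c'] c' \<open>c' \<le> c\<close> ct by simp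
  then have "kill_time T N K lam c0 z (mk \<sigma> y) i \<le> ereal c'" using KT1[OF g i c'(1,2)] by simp
  then have "c \<le> c'" using c by simp
  then show ?thesis using c c' \<open>c' \<le> c\<close> by simp
qed

end


context ksys
begin

definition Gam :: "(nat \<Rightarrow> real) \<Rightarrow> (nat \<Rightarrow> real \<Rightarrow> real) \<Rightarrow> (nat \<Rightarrow> real) \<Rightarrow> (nat \<Rightarrow> ereal) \<Rightarrow> nat \<Rightarrow> ereal" where
  "Gam x0 w z \<sigma> j = kill_time T N K lam c0 (z j) (mk \<sigma> (ysol x0 w \<sigma>)) j"

definition tmin :: "(nat \<Rightarrow> real) \<Rightarrow> (nat \<Rightarrow> real \<Rightarrow> real) \<Rightarrow> (nat \<Rightarrow> real) \<Rightarrow> (nat \<Rightarrow> ereal) \<Rightarrow> ereal" where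
  "tmin x0 w z \<sigma> = (INF j\<in>{..<N}. if \<sigma> j = \<infinity> then Gam x0 w z \<sigma> j else \<infinity>)"

definition stp :: "(nat \<Rightarrow> real) \<Rightarrow> (nat \<Rightarrow> real \<Rightarrow> real) \<Rightarrow> (nat \<Rightarrow> real) \<Rightarrow> (nat \<Rightarrow> ereal) \<Rightarrow> nat \<Rightarrow> ereal" where
  "stp x0 w z \<sigma> = (\<lambda>j. if j < N \<and> \<sigma> j = \<infinity> \<and> Gam x0 w z \<sigma> j = tmin x0 w z \<sigma> then tmin x0 w z \<sigma> else \<sigma> j)"

definition sig :: "(nat \<Rightarrow> real) \<Rightarrow> (nat \<Rightarrow> real \<Rightarrow> real) \<Rightarrow> (nat \<Rightarrow> real) \<Rightarrow> nat \<Rightarrow> nat \<Rightarrow> ereal" where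
  "sig x0 w z n = (stp x0 w z ^^ n) (\<lambda>_. \<infinity>)"

definition Inv :: "(nat \<Rightarrow> real) \<Rightarrow> (nat \<Rightarrow> real \<Rightarrow> real) \<Rightarrow> (nat \<Rightarrow> real) \<Rightarrow> (nat \<Rightarrow> ereal) \<Rightarrow> bool" where
  "Inv x0 w z \<sigma> \<longleftrightarrow> (\<forall>j<N. \<sigma> j \<noteq> \<infinity> \<longrightarrow> Gam x0 w z \<sigma> j = \<sigma> j) \<and>
     (\<forall>j<N. \<forall>k<N. \<sigma> j \<noteq> \<infinity> \<longrightarrow> \<sigma> k = \<infinity> \<longrightarrow> \<sigma> j \<le> Gam x0 w z \<sigma> k)"

lemma tmin_le: "j < N \<Longrightarrow> \<sigma> j = \<infinity> \<Longrightarrow> tmin x0 w z \<sigma> \<le> Gam x0 w z \<sigma> j"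
  unfolding tmin_def by (rule INF_lower2[of j]) auto

lemma tmin_ach:
  assumes "tmin x0 w z \<sigma> \<noteq> \<infinity>"
  shows "\<exists>j<N. \<sigma> j = \<infinity> \<and> Gam x0 w z \<sigma> j = tmin x0 w z \<sigma>"
proof -
  let ?f = "\<lambda>j. if \<sigma> j = \<infinity> then Gam x0 w z \<sigma> j else \<infinity>"
  have ne: "{..<N} \<noteq> {}" using assms unfolding tmin_def by (auto simp: top_ereal_def)
  have "Inf (?f ` {..<N}) \<in> ?f ` {..<N}"
    using Min_in[of "?f ` {..<N}"] Min_Inf[of "?f ` {..<N}"] ne by auto
  then obtain j where j: "j < N" "tmin x0 w z \<sigma> = ?f j" unfolding tmin_def by auto
  then show ?thesis using assms by (auto split: if_splits)
qed

context
  fixes x0 :: "nat \<Rightarrow> real" and w :: "nat \<Rightarrow> real \<Rightarrow> real" and z :: "nat \<Rightarrow> real"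
  assumes wc: "\<And>i. i < N \<Longrightarrow> continuous_on {0..T} (w i)"
begin

lemma gY: "good T N \<sigma> (ysol x0 w \<sigma>)"
  by (rule good_of_cont) (rule ysol_cont[OF wc])

lemma ysol_agree:
  assumes t: "0 \<le> t" "t \<le> T"
    and ag: "\<And>j r. j < N \<Longrightarrow> 0 \<le> r \<Longrightarrow> r < t \<Longrightarrow> (ereal r < \<sigma> j \<longleftrightarrow> ereal r < \<sigma>' j)"
    and j: "j < N" and r: "0 \<le> r" "r < t"
  shows "ysol x0 w \<sigma> j r = ysol x0 w \<sigma>' j r"
proof -
  let ?y = "ysol x0 w \<sigma>" and ?y' = "ysol x0 w \<sigma>'"
  have rT: "r \<le> T" using r t by simp
  have gr: "good r N (\<lambda>_. \<infinity>) (ysol x0 w s)" for s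
    unfolding good_def
  proof (intro allI impI)
    fix j assume jN: "j < N"
    show "continuous_on {ra. 0 \<le> ra \<and> ra \<le> r \<and> ereal ra < \<infinity>} (ysol x0 w s j)"
      by (rule continuous_on_subset[OF ysol_cont[OF wc jN]]) (use rT in auto)
  qed
  show ?thesis
  proof (rule FU[OF r(1) rT _ gr gr])
    fix i t' assume i: "i < N" and t': "t' \<in> {0..r}"
    show "?y i t' = x0 i + Ig \<sigma> ?y i t' + sqrt 2 * w i t'"
      by (rule ysol_fix[OF wc i]) (use t' rT in auto)
    have "?y' i t' = x0 i + Ig \<sigma>' ?y' i t' + sqrt 2 * w i t'"
      by (rule ysol_fix[OF wc i]) (use t' rT in auto)
    moreover have "Ig \<sigma>' ?y' i t' = Ig \<sigma> ?y' i t'"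
      by (rule Ig_cong) (rule mk_cong, use ag t' r in auto)
    ultimately show "?y' i t' = x0 i + Ig \<sigma> ?y' i t' + sqrt 2 * w i t'" by simp
  qed (use j r in auto)
qed

lemma Gam_causal:
  assumes t: "0 \<le> t" "t \<le> T"
    and ag: "\<And>j r. j < N \<Longrightarrow> 0 \<le> r \<Longrightarrow> r < t \<Longrightarrow> (ereal r < \<sigma> j \<longleftrightarrow> ereal r < \<sigma>' j)"
    and i: "i < N" and le: "Gam x0 w z \<sigma> i \<le> ereal t"
  shows "Gam x0 w z \<sigma>' i = Gam x0 w z \<sigma> i"
  unfolding Gam_def
proof (rule KT_causal[OF gY gY i t])
  fix j r assume "j < N" "0 \<le> r" "r < t"
  then show "mk \<sigma> (ysol x0 w \<sigma>) j r = mk \<sigma>' (ysol x0 w \<sigma>') j r"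
    using ag ysol_agree[OF t ag] by (intro mk_cong) auto
qed (use le in \<open>simp add: Gam_def\<close>)

lemma Gam_range: "j < N \<Longrightarrow> Gam x0 w z \<sigma> j = \<infinity> \<or> (\<exists>c. 0 \<le> c \<and> c \<le> T \<and> Gam x0 w z \<sigma> j = ereal c)"
  unfolding Gam_def by (rule KT_range[OF gY])

lemma stp_id: "tmin x0 w z \<sigma> = \<infinity> \<Longrightarrow> stp x0 w z \<sigma> = \<sigma>"
  unfolding stp_def by (auto simp: fun_eq_iff)

lemma stp_inv:
  assumes inv: "Inv x0 w z \<sigma>" and fin: "tmin x0 w z \<sigma> \<noteq> \<infinity>"
  shows "Inv x0 w z (stp x0 w z \<sigma>) \<and> card {j. j < N \<and> stp x0 w z \<sigma> j = \<infinity>} < card {j. j < N \<and> \<sigma> j = \<infinity>}"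
proof -
  let ?G = "Gam x0 w z" and ?s = "stp x0 w z \<sigma>" and ?m = "tmin x0 w z \<sigma>"
  obtain j0 where j0: "j0 < N" "\<sigma> j0 = \<infinity>" "?G \<sigma> j0 = ?m" using tmin_ach[OF fin] by blast
  obtain t where t: "0 \<le> t" "t \<le> T" "?m = ereal t" using Gam_range[OF j0(1), of \<sigma>] j0 fin by auto
  have s_cases: "?s j = \<sigma> j \<or> (\<sigma> j = \<infinity> \<and> ?s j = ereal t)" for j
    unfolding stp_def using t by auto
  have ag: "ereal r < \<sigma> j \<longleftrightarrow> ereal r < ?s j" if "r < t" for j r
    using s_cases[of j] that by auto
  have caus: "?G ?s i = ?G \<sigma> i" if "i < N" "?G \<sigma> i \<le> ereal t" for i
    by (rule Gam_causal[OF t(1,2) _ that]) (use ag in auto)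
  have caus': "?G \<sigma> i = ?G ?s i" if "i < N" "?G ?s i \<le> ereal t" for i
    by (rule Gam_causal[OF t(1,2) _ that]) (use ag in auto)
  have old_le: "\<sigma> j \<le> ereal t" if "j < N" "\<sigma> j \<noteq> \<infinity>" for j
    using inv that j0 t unfolding Inv_def by metis
  have fin_le: "?s j \<le> ereal t" if "j < N" "?s j \<noteq> \<infinity>" for j
    using s_cases[of j] old_le[OF that(1)] that by auto
  have A: "\<forall>j<N. ?s j \<noteq> \<infinity> \<longrightarrow> ?G ?s j = ?s j"
  proof (intro allI impI)
    fix j assume j: "j < N" "?s j \<noteq> \<infinity>"
    show "?G ?s j = ?s j"
    proof (cases "\<sigma> j = \<infinity>")
      case False
      then have "?s j = \<sigma> j" "?G \<sigma> j = \<sigma> j" using s_cases[of j] inv j unfolding Inv_def by auto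
      then show ?thesis using caus[OF j(1)] old_le[OF j(1) False] by simp
    next
      case True
      then have "?s j = ereal t" using s_cases[of j] j by auto
      moreover then have "?G \<sigma> j = ereal t" using True j t unfolding stp_def by (auto split: if_splits)
      ultimately show ?thesis using caus[OF j(1)] by simp
    qed
  qed
  have B: "\<forall>j<N. \<forall>k<N. ?s j \<noteq> \<infinity> \<longrightarrow> ?s k = \<infinity> \<longrightarrow> ?s j \<le> ?G ?s k"
  proof (intro allI impI)
    fix j k assume jk: "j < N" "k < N" "?s j \<noteq> \<infinity>" "?s k = \<infinity>"
    have sk: "\<sigma> k = \<infinity>" "\<not> (?G \<sigma> k = ?m)" using jk s_cases[of k] t unfolding stp_def by (auto split: if_splits)
    have "?m \<le> ?G \<sigma> k" by (rule tmin_le) (use jk sk in auto)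
    then have gt: "ereal t < ?G \<sigma> k" using sk(2) t by auto
    have "ereal t < ?G ?s k"
    proof (rule ccontr)
      assume "\<not> ereal t < ?G ?s k"
      then have "?G ?s k \<le> ereal t" by simp
      then have "?G \<sigma> k = ?G ?s k" by (rule caus'[OF jk(2)])
      then show False using gt \<open>?G ?s k \<le> ereal t\<close> by simp
    qed
    then show "?s j \<le> ?G ?s k" using fin_le[OF jk(1,3)] by simp
  qed
  have sub: "{j. j < N \<and> ?s j = \<infinity>} \<subseteq> {j. j < N \<and> \<sigma> j = \<infinity>} - {j0}"
    using s_cases j0 t by (auto simp: stp_def)
  have "card {j. j < N \<and> ?s j = \<infinity>} \<le> card ({j. j < N \<and> \<sigma> j = \<infinity>} - {j0})"
    by (rule card_mono[OF _ sub]) auto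
  also have "\<dots> < card {j. j < N \<and> \<sigma> j = \<infinity>}"
    by (rule card_Diff1_less) (use j0 in auto)
  finally show ?thesis using A B unfolding Inv_def by blast
qed

lemma sig_Suc: "sig x0 w z (Suc n) = stp x0 w z (sig x0 w z n)"
  by (simp add: sig_def)

lemma sig_claim: "Inv x0 w z (sig x0 w z n) \<and>
    (tmin x0 w z (sig x0 w z n) = \<infinity> \<or> card {j. j < N \<and> sig x0 w z n j = \<infinity>} + n \<le> N)"
proof (induction n)
  case 0
  have "card {j. j < N \<and> sig x0 w z 0 j = \<infinity>} \<le> card {..<N}"
    by (rule card_mono) auto
  then show ?case by (simp add: sig_def Inv_def)
next
  case (Suc n)
  show ?case
  proof (cases "tmin x0 w z (sig x0 w z n) = \<infinity>")
    case True
    then show ?thesis using Suc.IH by (simp add: sig_Suc stp_id)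
  next
    case False
    then have "card {j. j < N \<and> sig x0 w z n j = \<infinity>} + n \<le> N" using Suc.IH by auto
    then show ?thesis using stp_inv[OF _ False] Suc.IH by (auto simp: sig_Suc)
  qed
qed

lemma sstar_fix: "j < N \<Longrightarrow> Gam x0 w z (sig x0 w z N) j = sig x0 w z N j"
proof -
  assume j: "j < N"
  let ?s = "sig x0 w z N"
  have inv: "Inv x0 w z ?s" using sig_claim by blast
  have tm: "tmin x0 w z ?s = \<infinity>"
  proof -
    have "tmin x0 w z ?s = \<infinity> \<or> card {j. j < N \<and> ?s j = \<infinity>} = 0" using sig_claim[of N] by auto
    moreover have "tmin x0 w z ?s = \<infinity>" if c0: "card {j. j < N \<and> ?s j = \<infinity>} = 0"
    proof -
      have "{j. j < N \<and> ?s j = \<infinity>} = {}" using c0 by (subst (asm) card_0_eq) auto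
      then have "\<forall>j<N. ?s j \<noteq> \<infinity>" by auto
      then have "\<infinity> \<le> tmin x0 w z ?s" unfolding tmin_def by (intro INF_greatest) auto
      then show ?thesis by simp
    qed
    ultimately show ?thesis by blast
  qed
  show "Gam x0 w z ?s j = ?s j"
  proof (cases "?s j = \<infinity>")
    case True
    have "tmin x0 w z ?s \<le> Gam x0 w z ?s j" by (rule tmin_le) (use j True in auto)
    then show ?thesis using tm True by simp
  next
    case False then show ?thesis using inv j unfolding Inv_def by blast
  qed
qed

end

end


context ksys
begin

lemma exist_det:
  assumes wc: "\<And>i. i < N \<Longrightarrow> continuous_on {0..T} (w i)"
  shows "is_killed_solution T N K dK lam c0 phi0 phi1 x0 w z (mk (sig x0 w z N) (ysol x0 w (sig x0 w z N)))"
proof -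
  let ?s = "sig x0 w z N" let ?y = "ysol x0 w ?s" let ?\<xi> = "mk ?s ?y"
  have kt: "kill_time T N K lam c0 (z i) ?\<xi> i = ?s i" if "i < N" for i
    using sstar_fix[OF wc that] unfolding Gam_def .
  show ?thesis unfolding is_killed_solution_def
  proof (intro allI impI conjI)
    fix i assume i: "i < N"
    have "continuous_on {t. 0 \<le> t \<and> t \<le> T \<and> ereal t < ?s i} (?y i)"
      by (rule continuous_on_subset[OF ysol_cont[OF wc i]]) auto
    moreover have "continuous_on {t. 0 \<le> t \<and> t \<le> T \<and> ereal t < ?s i} (?y i) =
        continuous_on {t. 0 \<le> t \<and> t \<le> T \<and> ereal t < ?s i} (\<lambda>t. the (?\<xi> i t))"
      by (rule continuous_on_cong) (auto simp: mk_def)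
    ultimately show "continuous_on {t. 0 \<le> t \<and> t \<le> T \<and> ereal t < kill_time T N K lam c0 (z i) ?\<xi> i} (\<lambda>t. the (?\<xi> i t))"
      using kt[OF i] by simp
    fix t assume t: "0 \<le> t \<and> t \<le> T"
    {
      assume lt: "ereal t < kill_time T N K lam c0 (z i) ?\<xi> i"
      then have lt': "ereal t < ?s i" using kt[OF i] by simp
      have "?y i t = x0 i + Ig ?s ?y i t + sqrt 2 * w i t" by (rule ysol_fix[OF wc i]) (use t in auto)
      moreover have "Ig ?s ?y i t = set_lebesgue_integral lborel {0..t} (\<lambda>s.
                      drift_b lam c0 phi0 phi1 (intuN N K ?\<xi> s (the (?\<xi> i s)))
                                               (gradUN N dK ?\<xi> s (the (?\<xi> i s))))"
        unfolding Ig_def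
      proof (rule set_lebesgue_integral_cong[OF _ allI[OF impI]])
        fix s assume s: "s \<in> {0..t}"
        then have "ereal s \<le> ereal t" by simp
        then have "ereal s < ?s i" using lt' by (rule order.strict_trans1)
        then show "ig ?s ?y i s = drift_b lam c0 phi0 phi1 (intuN N K ?\<xi> s (the (?\<xi> i s)))
                                               (gradUN N dK ?\<xi> s (the (?\<xi> i s)))"
          by (simp add: ig_def mk_def)
      qed auto
      ultimately show "?\<xi> i t = Some (x0 i + set_lebesgue_integral lborel {0..t} (\<lambda>s.
                      drift_b lam c0 phi0 phi1 (intuN N K ?\<xi> s (the (?\<xi> i s)))
                                               (gradUN N dK ?\<xi> s (the (?\<xi> i s)))) + sqrt 2 * w i t)"
        using lt' by (simp add: mk_def)
    }
    {
      assume "kill_time T N K lam c0 (z i) ?\<xi> i \<le> ereal t"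
      then show "?\<xi> i t = None" using kt[OF i] by (simp add: mk_def)
    }
  qed
qed

end


context ksys
begin

definition tauS :: "(nat \<Rightarrow> real) \<Rightarrow> (nat \<Rightarrow> real \<Rightarrow> real option) \<Rightarrow> nat \<Rightarrow> ereal" where
  "tauS z \<xi> j = kill_time T N K lam c0 (z j) \<xi> j"

definition yS :: "(nat \<Rightarrow> real \<Rightarrow> real option) \<Rightarrow> nat \<Rightarrow> real \<Rightarrow> real" where
  "yS \<xi> j r = the (\<xi> j r)"

lemma sol_repr:
  assumes sol: "is_killed_solution T N K dK lam c0 phi0 phi1 x0 w z \<xi>"
  shows "\<And>j r. j < N \<Longrightarrow> r \<in> {0..T} \<Longrightarrow> \<xi> j r = mk (tauS z \<xi>) (yS \<xi>) j r"
    and "good T N (tauS z \<xi>) (yS \<xi>)"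
    and "\<And>i t. i < N \<Longrightarrow> t \<in> {0..T} \<Longrightarrow> ereal t < tauS z \<xi> i \<Longrightarrow>
            yS \<xi> i t = x0 i + Ig (tauS z \<xi>) (yS \<xi>) i t + sqrt 2 * w i t"
    and "\<And>i. i < N \<Longrightarrow> kill_time T N K lam c0 (z i) (mk (tauS z \<xi>) (yS \<xi>)) i = tauS z \<xi> i"
proof -
  let ?\<tau> = "tauS z \<xi>" and ?y = "yS \<xi>"
  note S = sol[unfolded is_killed_solution_def, rule_format]
  show A: "\<xi> j r = mk ?\<tau> ?y j r" if "j < N" "r \<in> {0..T}" for j r
  proof (cases "ereal r < ?\<tau> j")
    case True
    then have "\<xi> j r \<noteq> None" using S[OF that(1)] that(2) by (auto simp: tauS_def)
    then show ?thesis using True by (auto simp: mk_def yS_def)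
  next
    case False
    then have "\<xi> j r = None" using S[OF that(1)] that(2) by (auto simp: tauS_def not_less)
    then show ?thesis using False by (simp add: mk_def)
  qed
  show "good T N ?\<tau> ?y" unfolding good_def yS_def tauS_def using S by blast
  show "yS \<xi> i t = x0 i + Ig ?\<tau> ?y i t + sqrt 2 * w i t" if "i < N" "t \<in> {0..T}" "ereal t < ?\<tau> i" for i t
  proof -
    have e: "\<xi> i t = Some (x0 i + set_lebesgue_integral lborel {0..t} (\<lambda>s.
                      drift_b lam c0 phi0 phi1 (intuN N K \<xi> s (the (\<xi> i s)))
                                               (gradUN N dK \<xi> s (the (\<xi> i s)))) + sqrt 2 * w i t)"
      using S[OF that(1)] that by (auto simp: tauS_def)
    have "set_lebesgue_integral lborel {0..t} (\<lambda>s.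
                      drift_b lam c0 phi0 phi1 (intuN N K \<xi> s (the (\<xi> i s)))
                                               (gradUN N dK \<xi> s (the (\<xi> i s)))) = Ig ?\<tau> ?y i t"
      unfolding Ig_def
    proof (rule set_lebesgue_integral_cong[OF _ allI[OF impI]])
      fix s assume s: "s \<in> {0..t}"
      have "\<And>j r. j < N \<Longrightarrow> r \<in> {0..s} \<Longrightarrow> \<xi> j r = mk ?\<tau> ?y j r" using A s that(2) by auto
      then have "intuN N K \<xi> s = intuN N K (mk ?\<tau> ?y) s" "intuN N dK \<xi> s = intuN N dK (mk ?\<tau> ?y) s"
        using intuN_cong[of N s \<xi> "mk ?\<tau> ?y"] by auto
      then show "drift_b lam c0 phi0 phi1 (intuN N K \<xi> s (the (\<xi> i s))) (gradUN N dK \<xi> s (the (\<xi> i s))) = ig ?\<tau> ?y i s"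
        by (simp add: ig_def gradUN_eq yS_def)
    qed auto
    then show ?thesis using e by (simp add: yS_def)
  qed
  show "kill_time T N K lam c0 (z i) (mk ?\<tau> ?y) i = ?\<tau> i" if "i < N" for i
  proof -
    have "kill_time T N K lam c0 (z i) (mk ?\<tau> ?y) i = kill_time T N K lam c0 (z i) \<xi> i"
      by (rule kill_time_cong) (use A that in auto)
    then show ?thesis by (simp add: tauS_def)
  qed
qed

lemma tauS_nonneg:
  assumes sol: "is_killed_solution T N K dK lam c0 phi0 phi1 x0 w z \<xi>" and j: "j < N"
  shows "0 \<le> tauS z \<xi> j"
  using KT_range[OF sol_repr(2)[OF sol] j, of "z j"] sol_repr(4)[OF sol j] by auto

end


context ksys
begin

lemma DU:
  assumes sol: "is_killed_solution T N K dK lam c0 phi0 phi1 x0 w z \<xi>"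
    and sol': "is_killed_solution T N K dK lam c0 phi0 phi1 x0 w' z \<xi>'"
    and t0: "0 \<le> t0" "t0 \<le> T" and ww: "\<And>i s. i < N \<Longrightarrow> s \<in> {0..t0} \<Longrightarrow> w i s = w' i s"
    and i: "i < N" and t: "t \<in> {0..t0}"
  shows "\<xi> i t = \<xi>' i t"
proof -
  define \<tau> where "\<tau> = tauS z \<xi>" define \<tau>' where "\<tau>' = tauS z \<xi>'"
  define y where "y = yS \<xi>" define y' where "y' = yS \<xi>'"
  note R = sol_repr[OF sol, folded \<tau>_def y_def] and R' = sol_repr[OF sol', folded \<tau>'_def y'_def]
  have AGREE: "mk \<tau> y j r = mk \<tau>' y' j r"
    if t1: "0 \<le> t1" "t1 \<le> t0" and ag: "\<And>j r. j < N \<Longrightarrow> r \<in> {0..t1} \<Longrightarrow> (ereal r < \<tau> j \<longleftrightarrow> ereal r < \<tau>' j)"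
      and j: "j < N" and r: "r \<in> {0..t1}" for t1 j r
  proof -
    have t1T: "t1 \<le> T" using t1 t0 by simp
    have gy: "good t1 N \<tau> y"
      unfolding good_def
    proof (intro allI impI)
      fix j assume j: "j < N"
      have "continuous_on {r. 0 \<le> r \<and> r \<le> T \<and> ereal r < \<tau> j} (y j)" using R(2) j by (auto simp: good_def)
      then show "continuous_on {r. 0 \<le> r \<and> r \<le> t1 \<and> ereal r < \<tau> j} (y j)"
        by (rule continuous_on_subset) (use t1T in auto)
    qed
    have gy': "good t1 N \<tau> y'"
      unfolding good_def
    proof (intro allI impI)
      fix j assume j: "j < N"
      have "continuous_on {r. 0 \<le> r \<and> r \<le> T \<and> ereal r < \<tau>' j} (y' j)" using R'(2) j by (auto simp: good_def)
      then show "continuous_on {r. 0 \<le> r \<and> r \<le> t1 \<and> ereal r < \<tau> j} (y' j)"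
        by (rule continuous_on_subset) (use ag j t1T in auto)
    qed
    have eq: "y k s = y' k s" if "k < N" "s \<in> {0..t1}" "ereal s < \<tau> k" for k s
    proof (rule FU[OF t1(1) t1T _ gy gy' _ _ that])
      show "\<And>j. j < N \<Longrightarrow> \<tau> j \<le> \<tau> j" by simp
    next
      fix i t assume it: "i < N" "t \<in> {0..t1}" "ereal t < \<tau> i"
      show "y i t = x0 i + Ig \<tau> y i t + sqrt 2 * w i t" by (rule R(3)) (use it t1T in auto)
      have lt': "ereal t < \<tau>' i" using ag it by auto
      have "y' i t = x0 i + Ig \<tau>' y' i t + sqrt 2 * w' i t" by (rule R'(3)) (use it t1T lt' in auto)
      moreover have "w' i t = w i t" using ww[of i t] it t1 by auto
      moreover have "Ig \<tau>' y' i t = Ig \<tau> y' i t"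
      proof (rule Ig_cong)
        fix j r assume jr: "j < N" "r \<in> {0..t}"
        then have "r \<in> {0..t1}" using it by auto
        then show "mk \<tau>' y' j r = mk \<tau> y' j r" using ag[OF jr(1)] by (intro mk_cong) auto
      qed simp
      ultimately show "y' i t = x0 i + Ig \<tau> y' i t + sqrt 2 * w i t" by simp
    qed
    show ?thesis using eq[OF j r] ag[OF j r] by (auto simp: mk_def)
  qed
  define D where "D = {j. j < N \<and> \<tau> j \<noteq> \<tau>' j \<and> min (\<tau> j) (\<tau>' j) \<le> ereal t0}"
  show ?thesis
  proof (cases "D = {}")
    case True
    have ag: "ereal r < \<tau> j \<longleftrightarrow> ereal r < \<tau>' j" if "j < N" "r \<in> {0..t0}" for j r
    proof (cases "\<tau> j = \<tau>' j")
      case False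
      then have "\<not> min (\<tau> j) (\<tau>' j) \<le> ereal t0" using True that unfolding D_def by auto
      then have "ereal t0 < \<tau> j" "ereal t0 < \<tau>' j" by (simp_all add: min_le_iff_disj not_le)
      moreover have "ereal r \<le> ereal t0" using that by simp
      ultimately have "ereal r < \<tau> j" "ereal r < \<tau>' j" using order.strict_trans1 by blast+
      then show ?thesis by simp
    qed simp
    have "mk \<tau> y i t = mk \<tau>' y' i t" by (rule AGREE[OF t0(1) order.refl ag i t])
    then show ?thesis using R(1)[OF i] R'(1)[OF i] t t0 by auto
  next
    case False
    define mm where "mm = Min ((\<lambda>j. min (\<tau> j) (\<tau>' j)) ` D)"
    have finD: "finite D" unfolding D_def by auto
    have mmin: "mm \<in> (\<lambda>j. min (\<tau> j) (\<tau>' j)) ` D" unfolding mm_def using finD False by (intro Min_in) auto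
    then obtain j0 where j0: "j0 \<in> D" "mm = min (\<tau> j0) (\<tau>' j0)" by auto
    have mmle: "mm \<le> min (\<tau> j) (\<tau>' j)" if "j \<in> D" for j unfolding mm_def using finD that by (intro Min_le) auto
    have j0N: "j0 < N" using j0 unfolding D_def by auto
    have nn: "0 \<le> \<tau> j0" "0 \<le> \<tau>' j0" using tauS_nonneg[OF sol j0N] tauS_nonneg[OF sol' j0N] by (auto simp: \<tau>_def \<tau>'_def)
    have mm0: "0 \<le> mm" using j0(2) nn by simp
    have mmt: "mm \<le> ereal t0" using j0 unfolding D_def by auto
    obtain ts where ts: "mm = ereal ts" "0 \<le> ts" "ts \<le> t0"
    proof (cases mm)
      case (real r) then show ?thesis using that mm0 mmt by auto
    next
      case PInf then show ?thesis using mmt by simp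
    next
      case MInf then show ?thesis using mm0 by simp
    qed
    have ag: "ereal r < \<tau> j \<longleftrightarrow> ereal r < \<tau>' j" if "j < N" "0 \<le> r" "r < ts" for j r
    proof (cases "\<tau> j = \<tau>' j")
      case False
      show ?thesis
      proof (cases "j \<in> D")
        case True
        have a: "ereal r < ereal ts" using that by simp
        have b: "ereal ts \<le> min (\<tau> j) (\<tau>' j)" using mmle[OF True] ts by simp
        have "ereal r < min (\<tau> j) (\<tau>' j)" using order.strict_trans2[OF a b] .
        then show ?thesis by simp
      next
        case nD: False
        then have "\<not> min (\<tau> j) (\<tau>' j) \<le> ereal t0" using False that unfolding D_def by auto
        then have "ereal t0 < \<tau> j" "ereal t0 < \<tau>' j" by (simp_all add: min_le_iff_disj not_le)
        moreover have "ereal r \<le> ereal t0" using that ts by simp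
        ultimately have "ereal r < \<tau> j" "ereal r < \<tau>' j" using order.strict_trans1 by blast+
        then show ?thesis by simp
      qed
    qed simp
    have mkeq: "mk \<tau> y j r = mk \<tau>' y' j r" if "j < N" "0 \<le> r" "r < ts" for j r
      by (rule AGREE[of r]) (use that ts ag in auto)
    have tsT: "ts \<le> T" using ts t0 by simp
    have kAe: "kA (mk \<tau> y) j0 ts = kA (mk \<tau>' y') j0 ts"
      by (rule kA_spike[OF R(2) R'(2) j0N ts(2) tsT]) (use mkeq in auto)
    have KTy: "\<tau> j0 \<le> ereal c \<longleftrightarrow> z j0 \<le> kA (mk \<tau> y) j0 c" if "0 \<le> c" "c \<le> T" for c
      using KT1[OF R(2) j0N that, of "z j0"] R(4)[OF j0N] by simp
    have KTy': "\<tau>' j0 \<le> ereal c \<longleftrightarrow> z j0 \<le> kA (mk \<tau>' y') j0 c" if "0 \<le> c" "c \<le> T" for c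
      using KT1[OF R'(2) j0N that, of "z j0"] R'(4)[OF j0N] by simp
    have "\<tau> j0 = \<tau>' j0"
    proof (cases "\<tau> j0 \<le> \<tau>' j0")
      case True
      then have "\<tau> j0 = ereal ts" using j0 ts by (simp add: min_def)
      then have "z j0 \<le> kA (mk \<tau>' y') j0 ts" using KTy[OF ts(2) tsT] kAe by simp
      then have "\<tau>' j0 \<le> ereal ts" using KTy'[OF ts(2) tsT] by simp
      then show ?thesis using True \<open>\<tau> j0 = ereal ts\<close> by simp
    next
      case False
      then have "\<tau>' j0 = ereal ts" using j0 ts by (simp add: min_def)
      then have "z j0 \<le> kA (mk \<tau> y) j0 ts" using KTy'[OF ts(2) tsT] kAe by simp
      then have "\<tau> j0 \<le> ereal ts" using KTy[OF ts(2) tsT] by simp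
      then show ?thesis using False \<open>\<tau>' j0 = ereal ts\<close> by simp
    qed
    then show ?thesis using j0 unfolding D_def by simp
  qed
qed

end


definition clip :: "real \<Rightarrow> real \<Rightarrow> real" where "clip T t = max 0 (min T t)"

lemma clip_in: "0 \<le> T \<Longrightarrow> clip T t \<in> {0..T}" by (auto simp: clip_def)
lemma clip_id: "t \<in> {0..T} \<Longrightarrow> clip T t = t" by (auto simp: clip_def)
lemma clip_cont: "continuous_on A (clip T)" unfolding clip_def by (intro continuous_intros)
lemma clip_meas[measurable]: "clip T \<in> borel_measurable borel" unfolding clip_def by measurable

lemma floor_approx: "(\<lambda>n. real_of_int \<lfloor>real (Suc n) * t\<rfloor> / real (Suc n)) \<longlonglongrightarrow> (t::real)"
proof -
  have lo: "t - 1 / real (Suc n) \<le> real_of_int \<lfloor>real (Suc n) * t\<rfloor> / real (Suc n)" for n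
  proof -
    have "t - 1 / real (Suc n) = (real (Suc n) * t - 1) / real (Suc n)" by (simp add: field_simps)
    also have "\<dots> \<le> real_of_int \<lfloor>real (Suc n) * t\<rfloor> / real (Suc n)"
      by (rule divide_right_mono) (linarith, simp)
    finally show ?thesis .
  qed
  have hi: "real_of_int \<lfloor>real (Suc n) * t\<rfloor> / real (Suc n) \<le> t" for n
  proof -
    have "real_of_int \<lfloor>real (Suc n) * t\<rfloor> / real (Suc n) \<le> real (Suc n) * t / real (Suc n)"
      by (rule divide_right_mono) (linarith, simp)
    then show ?thesis by simp
  qed
  have "(\<lambda>n. t - 1 / real (Suc n)) \<longlonglongrightarrow> t - 0"
    by (intro tendsto_intros LIMSEQ_inverse_real_of_nat[unfolded inverse_eq_divide])
  then have l: "(\<lambda>n. t - 1 / real (Suc n)) \<longlonglongrightarrow> t" by simp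
  show ?thesis
    by (rule real_tendsto_sandwich[OF always_eventually always_eventually l tendsto_const]) (use lo hi in auto)
qed

lemma CAR:
  fixes f :: "real \<Rightarrow> 'a \<Rightarrow> real"
  assumes m: "\<And>t. t \<in> {0..T} \<Longrightarrow> f t \<in> borel_measurable M"
    and c: "\<And>\<omega>. \<omega> \<in> space M \<Longrightarrow> continuous_on {0..T} (\<lambda>t. f t \<omega>)" and T: "0 \<le> T"
  shows "(\<lambda>p. f (clip T (snd p)) (fst p)) \<in> borel_measurable (M \<Otimes>\<^sub>M lborel)"
proof (rule borel_measurable_LIMSEQ_real)
  define g where "g n p = f (clip T (real_of_int \<lfloor>real (Suc n) * snd p\<rfloor> / real (Suc n))) (fst p)" for n p
  show "g n \<in> borel_measurable (M \<Otimes>\<^sub>M lborel)" for n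
  proof -
    let ?h = "\<lambda>(k::int, \<omega>). f (clip T (real_of_int k / real (Suc n))) \<omega>"
    have h: "?h \<in> borel_measurable (count_space UNIV \<Otimes>\<^sub>M M)"
      by (rule measurable_pair_measure_countable1) (auto intro: m clip_in[OF T])
    have pm: "(\<lambda>p. (\<lfloor>real (Suc n) * snd p\<rfloor>, fst p)) \<in> measurable (M \<Otimes>\<^sub>M lborel) (count_space UNIV \<Otimes>\<^sub>M M)"
      by measurable
    have "g n = ?h \<circ> (\<lambda>p. (\<lfloor>real (Suc n) * snd p\<rfloor>, fst p))" by (auto simp: g_def fun_eq_iff)
    then show ?thesis using measurable_comp[OF pm h] by simp
  qed
  fix p :: "'a \<times> real" assume p: "p \<in> space (M \<Otimes>\<^sub>M lborel)"
  then have \<omega>: "fst p \<in> space M" by (auto simp: space_pair_measure)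
  have cc: "continuous_on UNIV (\<lambda>t. f (clip T t) (fst p))"
    by (rule continuous_on_compose2[OF c[OF \<omega>] clip_cont]) (use clip_in[OF T] in auto)
  show "(\<lambda>n. g n p) \<longlonglongrightarrow> f (clip T (snd p)) (fst p)"
    unfolding g_def
    by (rule continuous_on_tendsto_compose[OF cc floor_approx]) auto
qed


context ksys
begin

context
  fixes Sg :: "'a measure" and \<sigma> :: "'a \<Rightarrow> nat \<Rightarrow> ereal" and P :: "'a \<Rightarrow> nat \<Rightarrow> real \<Rightarrow> real"
  assumes \<sigma>m: "\<And>j. j < N \<Longrightarrow> (\<lambda>\<omega>. \<sigma> \<omega> j) \<in> borel_measurable Sg"
    and Pm: "\<And>i t. i < N \<Longrightarrow> t \<in> {0..T} \<Longrightarrow> (\<lambda>\<omega>. P \<omega> i t) \<in> borel_measurable Sg"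
    and Pc: "\<And>i \<omega>. i < N \<Longrightarrow> \<omega> \<in> space Sg \<Longrightarrow> continuous_on {0..T} (P \<omega> i)"
begin

lemma PJ: "j < N \<Longrightarrow> (\<lambda>p. P (fst p) j (clip T (snd p))) \<in> borel_measurable (Sg \<Otimes>\<^sub>M lborel)"
  by (rule CAR[of T "\<lambda>t \<omega>. P \<omega> j t", simplified]) (use Pm Pc T_pos in auto)

lemma M_intuN:
  assumes \<kappa>: "continuous_on UNIV \<kappa>" and s: "s \<in> {0..T}" and X: "X \<in> borel_measurable Sg"
  shows "(\<lambda>\<omega>. intuN N \<kappa> (mk (\<sigma> \<omega>) (P \<omega>)) s (X \<omega>)) \<in> borel_measurable Sg"
proof -
  have \<kappa>m[measurable]: "\<kappa> \<in> borel_measurable borel" using \<kappa> by (rule borel_measurable_continuous_onI)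
  define F where "F \<omega> r = indicator {0..s} r *\<^sub>R ((1 / real N) * (\<Sum>j<N.
      (if ereal r < \<sigma> \<omega> j then \<kappa> (X \<omega> - P \<omega> j (clip T r)) else 0)))" for \<omega> r
  have Fm: "(\<lambda>p. F (fst p) (snd p)) \<in> borel_measurable (Sg \<Otimes>\<^sub>M lborel)"
  proof -
    have [measurable]: "\<And>j. j < N \<Longrightarrow> (\<lambda>p. P (fst p) j (clip T (snd p))) \<in> borel_measurable (Sg \<Otimes>\<^sub>M lborel)"
      by (rule PJ)
    have [measurable]: "\<And>j. j < N \<Longrightarrow> (\<lambda>\<omega>. \<sigma> \<omega> j) \<in> borel_measurable Sg" by (rule \<sigma>m)
    have [measurable]: "X \<in> borel_measurable Sg" by (rule X)
    show ?thesis unfolding F_def by measurable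
  qed
  have "(\<lambda>\<omega>. \<integral>r. F \<omega> r \<partial>lborel) \<in> borel_measurable Sg"
    using lborel.borel_measurable_lebesgue_integral[of F Sg] Fm by (simp add: case_prod_beta')
  moreover have "intuN N \<kappa> (mk (\<sigma> \<omega>) (P \<omega>)) s (X \<omega>) = (\<integral>r. F \<omega> r \<partial>lborel)" for \<omega>
  proof -
    have "indicator {0..s} r *\<^sub>R uN N \<kappa> (mk (\<sigma> \<omega>) (P \<omega>)) r (X \<omega>) = F \<omega> r" for r
    proof (cases "r \<in> {0..s}")
      case True
      then have c: "clip T r = r" using s by (auto simp: clip_def)
      have "uN N \<kappa> (mk (\<sigma> \<omega>) (P \<omega>)) r (X \<omega>) = (1 / real N) * (\<Sum>j<N.
          (if ereal r < \<sigma> \<omega> j then \<kappa> (X \<omega> - P \<omega> j (clip T r)) else 0))"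
        unfolding uN_mk c ..
      then show ?thesis using True by (simp add: F_def)
    qed (simp add: F_def)
    then show ?thesis unfolding intuN_def set_lebesgue_integral_def by simp
  qed
  ultimately show ?thesis by simp
qed


lemma M_ig:
  assumes s: "s \<in> {0..T}" and i: "i < N"
  shows "(\<lambda>\<omega>. ig (\<sigma> \<omega>) (P \<omega>) i s) \<in> borel_measurable Sg"
proof -
  have [measurable]: "(\<lambda>\<omega>. intuN N K (mk (\<sigma> \<omega>) (P \<omega>)) s (P \<omega> i s)) \<in> borel_measurable Sg"
    by (rule M_intuN[OF kK.kcont s Pm[OF i s]])
  have [measurable]: "(\<lambda>\<omega>. intuN N dK (mk (\<sigma> \<omega>) (P \<omega>)) s (P \<omega> i s)) \<in> borel_measurable Sg"
    by (rule M_intuN[OF kD.kcont s Pm[OF i s]])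
  show ?thesis unfolding ig_def gradUN_eq drift_b_def by measurable
qed

lemma goodP: "\<omega> \<in> space Sg \<Longrightarrow> good T N (\<sigma> \<omega>) (P \<omega>)"
  by (rule good_of_cont) (rule Pc)

lemma M_igJ:
  assumes i: "i < N"
  shows "(\<lambda>p. ig (\<sigma> (fst p)) (P (fst p)) i (clip T (snd p))) \<in> borel_measurable (Sg \<Otimes>\<^sub>M lborel)"
proof (rule CAR[of T "\<lambda>t \<omega>. ig (\<sigma> \<omega>) (P \<omega>) i t"])
  show "\<And>t. t \<in> {0..T} \<Longrightarrow> (\<lambda>\<omega>. ig (\<sigma> \<omega>) (P \<omega>) i t) \<in> borel_measurable Sg"
    using M_ig i by auto
  show "\<And>\<omega>. \<omega> \<in> space Sg \<Longrightarrow> continuous_on {0..T} (ig (\<sigma> \<omega>) (P \<omega>) i)"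
    by (rule ig_cont[OF goodP]) (use T_pos Pc i in auto)
  show "0 \<le> T" using T_pos by simp
qed

lemma M_Ig:
  assumes t: "t \<in> {0..T}" and i: "i < N"
  shows "(\<lambda>\<omega>. Ig (\<sigma> \<omega>) (P \<omega>) i t) \<in> borel_measurable Sg"
proof -
  define G where "G \<omega> s = indicator {0..t} s *\<^sub>R ig (\<sigma> \<omega>) (P \<omega>) i (clip T s)" for \<omega> s
  have [measurable]: "(\<lambda>p. ig (\<sigma> (fst p)) (P (fst p)) i (clip T (snd p))) \<in> borel_measurable (Sg \<Otimes>\<^sub>M lborel)"
    by (rule M_igJ[OF i])
  have Gm: "(\<lambda>p. G (fst p) (snd p)) \<in> borel_measurable (Sg \<Otimes>\<^sub>M lborel)" unfolding G_def by measurable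
  have "(\<lambda>\<omega>. \<integral>s. G \<omega> s \<partial>lborel) \<in> borel_measurable Sg"
    using lborel.borel_measurable_lebesgue_integral[of G Sg] Gm by (simp add: case_prod_beta')
  moreover have "Ig (\<sigma> \<omega>) (P \<omega>) i t = (\<integral>s. G \<omega> s \<partial>lborel)" for \<omega>
  proof -
    have "indicator {0..t} s *\<^sub>R ig (\<sigma> \<omega>) (P \<omega>) i s = G \<omega> s" for s
    proof (cases "s \<in> {0..t}")
      case True
      then have c: "clip T s = s" using t by (auto simp: clip_def)
      show ?thesis unfolding G_def c ..
    qed (simp add: G_def)
    then show ?thesis unfolding Ig_def set_lebesgue_integral_def by simp
  qed
  ultimately show ?thesis by simp
qed

lemma M_kA:
  assumes j: "j < N" and c: "c \<in> {0..T}"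
  shows "(\<lambda>\<omega>. kA (mk (\<sigma> \<omega>) (P \<omega>)) j c) \<in> borel_measurable Sg"
proof -
  define V where "V \<omega> s = intuN N K (mk (\<sigma> \<omega>) (P \<omega>)) s (P \<omega> j s)" for \<omega> s
  have VJ[measurable]: "(\<lambda>p. V (fst p) (clip T (snd p))) \<in> borel_measurable (Sg \<Otimes>\<^sub>M lborel)"
  proof (rule CAR[of T "\<lambda>t \<omega>. V \<omega> t"])
    show "\<And>t. t \<in> {0..T} \<Longrightarrow> (\<lambda>\<omega>. V \<omega> t) \<in> borel_measurable Sg"
      unfolding V_def by (rule M_intuN[OF kK.kcont _ Pm[OF j]])
    show "0 \<le> T" using T_pos by simp
    fix \<omega> assume \<omega>: "\<omega> \<in> space Sg"
    show "continuous_on {0..T} (\<lambda>t. V \<omega> t)" unfolding V_def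
      by (rule continuous_on_compose2[OF kK.intuN_cont2[OF goodP[OF \<omega>]], of _ "\<lambda>s. (s, P \<omega> j s)", simplified])
         (auto intro!: continuous_intros Pc[OF j \<omega>])
  qed
  have [measurable]: "\<And>j. j < N \<Longrightarrow> (\<lambda>\<omega>. \<sigma> \<omega> j) \<in> borel_measurable Sg" by (rule \<sigma>m)
  define G where "G \<omega> s = indicator {0..c} s *\<^sub>R
      (if ereal s < \<sigma> \<omega> j then lam * c0 * exp (- lam * V \<omega> (clip T s)) else lam * c0)" for \<omega> s
  have Gm: "(\<lambda>p. G (fst p) (snd p)) \<in> borel_measurable (Sg \<Otimes>\<^sub>M lborel)" unfolding G_def using j by measurable
  have "(\<lambda>\<omega>. \<integral>s. G \<omega> s \<partial>lborel) \<in> borel_measurable Sg"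
    using lborel.borel_measurable_lebesgue_integral[of G Sg] Gm by (simp add: case_prod_beta')
  moreover have "kA (mk (\<sigma> \<omega>) (P \<omega>)) j c = (\<integral>s. G \<omega> s \<partial>lborel)" for \<omega>
  proof -
    have "indicator {0..c} s *\<^sub>R kint (mk (\<sigma> \<omega>) (P \<omega>)) j s = G \<omega> s" for s
    proof (cases "s \<in> {0..c}")
      case True
      then have cs: "clip T s = s" using c by (auto simp: clip_def)
      show ?thesis unfolding G_def cs kint_mk V_def ..
    qed (simp add: G_def)
    then show ?thesis unfolding kA_def set_lebesgue_integral_def by simp
  qed
  ultimately show ?thesis by simp
qed

end

end


context ksys
begin

context
  fixes Sg :: "'a measure" and X0 Zf :: "nat \<Rightarrow> 'a \<Rightarrow> real" and Wf :: "nat \<Rightarrow> real \<Rightarrow> 'a \<Rightarrow> real"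
  assumes X0m: "\<And>i. i < N \<Longrightarrow> X0 i \<in> borel_measurable Sg"
    and Zm: "\<And>i. i < N \<Longrightarrow> Zf i \<in> borel_measurable Sg"
    and Wm: "\<And>i t. i < N \<Longrightarrow> t \<in> {0..T} \<Longrightarrow> Wf i t \<in> borel_measurable Sg"
    and Wc: "\<And>i \<omega>. i < N \<Longrightarrow> \<omega> \<in> space Sg \<Longrightarrow> continuous_on {0..T} (\<lambda>t. Wf i t \<omega>)"
begin

abbreviation xo where "xo \<omega> \<equiv> (\<lambda>i. X0 i \<omega>)"
abbreviation wo where "wo \<omega> \<equiv> (\<lambda>i t. Wf i t \<omega>)"
abbreviation zo where "zo \<omega> \<equiv> (\<lambda>i. Zf i \<omega>)"

lemma wcw: "\<omega> \<in> space Sg \<Longrightarrow> (\<And>i. i < N \<Longrightarrow> continuous_on {0..T} (wo \<omega> i))"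
  using Wc by auto

context
  fixes \<sigma> :: "'a \<Rightarrow> nat \<Rightarrow> ereal"
  assumes \<sigma>m: "\<And>j. j < N \<Longrightarrow> (\<lambda>\<omega>. \<sigma> \<omega> j) \<in> borel_measurable Sg"
begin

lemma M_Pic: "i < N \<Longrightarrow> t \<in> {0..T} \<Longrightarrow> (\<lambda>\<omega>. Pic (xo \<omega>) (wo \<omega>) (\<sigma> \<omega>) n i t) \<in> borel_measurable Sg"
proof (induction n arbitrary: i t)
  case 0 then show ?case by (simp add: Pic_0)
next
  case (Suc n)
  have Ig: "(\<lambda>\<omega>. Ig (\<sigma> \<omega>) (Pic (xo \<omega>) (wo \<omega>) (\<sigma> \<omega>) n) i t) \<in> borel_measurable Sg"
  proof (rule M_Ig[OF \<sigma>m _ _ Suc.prems(2,1)])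
    show "\<And>i t. i < N \<Longrightarrow> t \<in> {0..T} \<Longrightarrow> (\<lambda>\<omega>. Pic (xo \<omega>) (wo \<omega>) (\<sigma> \<omega>) n i t) \<in> borel_measurable Sg"
      by (rule Suc.IH)
    show "\<And>i \<omega>. i < N \<Longrightarrow> \<omega> \<in> space Sg \<Longrightarrow> continuous_on {0..T} (Pic (xo \<omega>) (wo \<omega>) (\<sigma> \<omega>) n i)"
      by (rule Pic_cont[OF wcw])
  qed auto
  have [measurable]: "X0 i \<in> borel_measurable Sg" "Wf i t \<in> borel_measurable Sg"
    using X0m Wm Suc.prems by auto
  show ?case unfolding Pic_Suc Phi_def using Ig by measurable
qed

lemma M_ysol: "i < N \<Longrightarrow> t \<in> {0..T} \<Longrightarrow> (\<lambda>\<omega>. ysol (xo \<omega>) (wo \<omega>) (\<sigma> \<omega>) i t) \<in> borel_measurable Sg"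
  by (rule borel_measurable_LIMSEQ_real[OF ysol_lim[OF wcw] M_Pic])

lemma ysol_c: "i < N \<Longrightarrow> \<omega> \<in> space Sg \<Longrightarrow> continuous_on {0..T} (ysol (xo \<omega>) (wo \<omega>) (\<sigma> \<omega>) i)"
  by (rule ysol_cont[OF wcw])

lemma M_Gam: assumes j: "j < N"
  shows "(\<lambda>\<omega>. Gam (xo \<omega>) (wo \<omega>) (zo \<omega>) (\<sigma> \<omega>) j) \<in> borel_measurable Sg"
proof (rule borel_measurableI_le)
  let ?y = "\<lambda>\<omega>. ysol (xo \<omega>) (wo \<omega>) (\<sigma> \<omega>)"
  let ?G = "\<lambda>\<omega>. Gam (xo \<omega>) (wo \<omega>) (zo \<omega>) (\<sigma> \<omega>) j"
  have kAm: "(\<lambda>\<omega>. kA (mk (\<sigma> \<omega>) (?y \<omega>)) j c) \<in> borel_measurable Sg" if "c \<in> {0..T}" for c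
    by (rule M_kA[OF \<sigma>m M_ysol ysol_c j that])
  have g: "\<omega> \<in> space Sg \<Longrightarrow> good T N (\<sigma> \<omega>) (?y \<omega>)" for \<omega> by (rule gY[OF wcw])
  have rng: "?G \<omega> = \<infinity> \<or> (\<exists>c. 0 \<le> c \<and> c \<le> T \<and> ?G \<omega> = ereal c)" if "\<omega> \<in> space Sg" for \<omega>
    by (rule Gam_range[OF wcw[OF that] j])
  have key: "?G \<omega> \<le> ereal c \<longleftrightarrow> Zf j \<omega> \<le> kA (mk (\<sigma> \<omega>) (?y \<omega>)) j (min c T)"
    if "\<omega> \<in> space Sg" "0 \<le> c" for \<omega> c
  proof -
    have "?G \<omega> \<le> ereal c \<longleftrightarrow> ?G \<omega> \<le> ereal (min c T)" using rng[OF that(1)] by auto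
    also have "\<dots> \<longleftrightarrow> Zf j \<omega> \<le> kA (mk (\<sigma> \<omega>) (?y \<omega>)) j (min c T)"
      unfolding Gam_def by (rule KT1[OF g[OF that(1)] j]) (use that T_pos in auto)
    finally show ?thesis .
  qed
  fix c :: ereal
  show "{\<omega> \<in> space Sg. ?G \<omega> \<le> c} \<in> sets Sg"
  proof (cases c)
    case (real r)
    show ?thesis
    proof (cases "0 \<le> r")
      case True
      have [measurable]: "(\<lambda>\<omega>. kA (mk (\<sigma> \<omega>) (?y \<omega>)) j (min r T)) \<in> borel_measurable Sg"
        by (rule kAm) (use True T_pos in auto)
      have [measurable]: "Zf j \<in> borel_measurable Sg" using Zm j by auto
      have "{\<omega> \<in> space Sg. ?G \<omega> \<le> c} = {\<omega> \<in> space Sg. Zf j \<omega> \<le> kA (mk (\<sigma> \<omega>) (?y \<omega>)) j (min r T)}"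
        using key True real by auto
      also have "\<dots> \<in> sets Sg" by measurable
      finally show ?thesis .
    next
      case False
      have "\<not> ?G \<omega> \<le> c" if "\<omega> \<in> space Sg" for \<omega>
        using rng[OF that] real False by auto
      then have "{\<omega> \<in> space Sg. ?G \<omega> \<le> c} = {}" by blast
      then show ?thesis by (simp only: sets.empty_sets)
    qed
  next
    case PInf then show ?thesis by simp
  next
    case MInf
    have "\<not> ?G \<omega> \<le> c" if "\<omega> \<in> space Sg" for \<omega>
      using rng[OF that] MInf by auto
    then have "{\<omega> \<in> space Sg. ?G \<omega> \<le> c} = {}" by blast
    then show ?thesis by (simp only: sets.empty_sets)
  qed
qed

lemma M_tmin: "(\<lambda>\<omega>. tmin (xo \<omega>) (wo \<omega>) (zo \<omega>) (\<sigma> \<omega>)) \<in> borel_measurable Sg"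
proof -
  have [measurable]: "\<And>j. j < N \<Longrightarrow> (\<lambda>\<omega>. Gam (xo \<omega>) (wo \<omega>) (zo \<omega>) (\<sigma> \<omega>) j) \<in> borel_measurable Sg"
    by (rule M_Gam)
  have [measurable]: "\<And>j. j < N \<Longrightarrow> (\<lambda>\<omega>. \<sigma> \<omega> j) \<in> borel_measurable Sg" by (rule \<sigma>m)
  show ?thesis unfolding tmin_def by measurable
qed

lemma M_stp: "j < N \<Longrightarrow> (\<lambda>\<omega>. stp (xo \<omega>) (wo \<omega>) (zo \<omega>) (\<sigma> \<omega>) j) \<in> borel_measurable Sg"
proof -
  assume j: "j < N"
  have [measurable]: "(\<lambda>\<omega>. Gam (xo \<omega>) (wo \<omega>) (zo \<omega>) (\<sigma> \<omega>) j) \<in> borel_measurable Sg" by (rule M_Gam[OF j])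
  have [measurable]: "(\<lambda>\<omega>. \<sigma> \<omega> j) \<in> borel_measurable Sg" by (rule \<sigma>m[OF j])
  have [measurable]: "(\<lambda>\<omega>. tmin (xo \<omega>) (wo \<omega>) (zo \<omega>) (\<sigma> \<omega>)) \<in> borel_measurable Sg" by (rule M_tmin)
  show ?thesis unfolding stp_def using j by measurable
qed

end

lemma M_sig: "j < N \<Longrightarrow> (\<lambda>\<omega>. sig (xo \<omega>) (wo \<omega>) (zo \<omega>) n j) \<in> borel_measurable Sg"
proof (induction n arbitrary: j)
  case 0 then show ?case by (simp add: sig_def)
next
  case (Suc n)
  have "(\<lambda>\<omega>. stp (xo \<omega>) (wo \<omega>) (zo \<omega>) (sig (xo \<omega>) (wo \<omega>) (zo \<omega>) n) j) \<in> borel_measurable Sg"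
    by (rule M_stp[OF Suc.IH Suc.prems])
  then show ?case by (simp add: sig_def)
qed

end

end


context ksys
begin

definition Sol :: "(nat \<Rightarrow> real) \<Rightarrow> (nat \<Rightarrow> real \<Rightarrow> real) \<Rightarrow> (nat \<Rightarrow> real) \<Rightarrow> nat \<Rightarrow> real \<Rightarrow> real option" where
  "Sol x0 w z = mk (sig x0 w z N) (ysol x0 w (sig x0 w z N))"

lemma Sol_sol:
  assumes wc: "\<And>i. i < N \<Longrightarrow> continuous_on {0..T} (w i)"
  shows "is_killed_solution T N K dK lam c0 phi0 phi1 x0 w z (Sol x0 w z)"
  unfolding Sol_def by (rule exist_det[OF wc])

lemma M_Sol:
  fixes Sg :: "'a measure" and X0 Zf :: "nat \<Rightarrow> 'a \<Rightarrow> real" and Wf :: "nat \<Rightarrow> real \<Rightarrow> 'a \<Rightarrow> real"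
  assumes X0m: "\<And>i. i < N \<Longrightarrow> X0 i \<in> borel_measurable Sg"
    and Zm: "\<And>i. i < N \<Longrightarrow> Zf i \<in> borel_measurable Sg"
    and Wm: "\<And>i t. i < N \<Longrightarrow> t \<in> {0..T} \<Longrightarrow> Wf i t \<in> borel_measurable Sg"
    and Wc: "\<And>i \<omega>. i < N \<Longrightarrow> \<omega> \<in> space Sg \<Longrightarrow> continuous_on {0..T} (\<lambda>t. Wf i t \<omega>)"
    and i: "i < N" and t: "t \<in> {0..T}"
  shows "meas_opt Sg (\<lambda>\<omega>. Sol (\<lambda>i. X0 i \<omega>) (\<lambda>i t. Wf i t \<omega>) (\<lambda>i. Zf i \<omega>) i t)"
proof -
  let ?s = "\<lambda>\<omega>. sig (\<lambda>i. X0 i \<omega>) (\<lambda>i t. Wf i t \<omega>) (\<lambda>i. Zf i \<omega>) N"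
  have sm: "\<And>j. j < N \<Longrightarrow> (\<lambda>\<omega>. ?s \<omega> j) \<in> borel_measurable Sg"
    by (rule M_sig[OF X0m Zm Wm Wc])
  have [measurable]: "(\<lambda>\<omega>. ?s \<omega> i) \<in> borel_measurable Sg" by (rule sm[OF i])
  have [measurable]: "(\<lambda>\<omega>. ysol (\<lambda>i. X0 i \<omega>) (\<lambda>i t. Wf i t \<omega>) (?s \<omega>) i t) \<in> borel_measurable Sg"
    by (rule M_ysol[OF X0m Zm Wm Wc sm i t])
  show ?thesis unfolding meas_opt_def Sol_def mk_def
  proof (intro conjI ballI)
    have "{\<omega> \<in> space Sg. (if ereal t < ?s \<omega> i then Some (ysol (\<lambda>i. X0 i \<omega>) (\<lambda>i t. Wf i t \<omega>) (?s \<omega>) i t) else None) = None}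
        = {\<omega> \<in> space Sg. \<not> ereal t < ?s \<omega> i}" by auto
    also have "\<dots> \<in> sets Sg" by measurable
    finally show "{\<omega> \<in> space Sg. (if ereal t < ?s \<omega> i then Some (ysol (\<lambda>i. X0 i \<omega>) (\<lambda>i t. Wf i t \<omega>) (?s \<omega>) i t) else None) = None} \<in> sets Sg" .
    fix B :: "real set" assume B: "B \<in> sets borel"
    have "{\<omega> \<in> space Sg. (if ereal t < ?s \<omega> i then Some (ysol (\<lambda>i. X0 i \<omega>) (\<lambda>i t. Wf i t \<omega>) (?s \<omega>) i t) else None) \<in> Some ` B}
        = {\<omega> \<in> space Sg. ereal t < ?s \<omega> i \<and> ysol (\<lambda>i. X0 i \<omega>) (\<lambda>i t. Wf i t \<omega>) (?s \<omega>) i t \<in> B}" by auto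
    also have "\<dots> \<in> sets Sg" using B by measurable
    finally show "{\<omega> \<in> space Sg. (if ereal t < ?s \<omega> i then Some (ysol (\<lambda>i. X0 i \<omega>) (\<lambda>i t. Wf i t \<omega>) (?s \<omega>) i t) else None) \<in> Some ` B} \<in> sets Sg" .
  qed
qed

end


lemma gen_meas:
  assumes "X \<in> Xs"
  shows "X \<in> borel_measurable (sigma (space M) (gen_sigma M Xs))"
proof -
  have sub: "gen_sigma M Xs \<subseteq> Pow (space M)"
  proof
    fix x assume "x \<in> gen_sigma M Xs"
    then have "x \<subseteq> space M" unfolding gen_sigma_def by (rule sigma_sets_into_sp[rotated]) auto
    then show "x \<in> Pow (space M)" by simp
  qed
  show ?thesis
  proof (rule measurableI)
    fix x assume "x \<in> space (sigma (space M) (gen_sigma M Xs))" then show "X x \<in> space borel" by simp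
  next
    fix A :: "real set" assume A: "A \<in> sets borel"
    have "X -` A \<inter> space M \<in> gen_sigma M Xs"
      unfolding gen_sigma_def by (rule sigma_sets.Basic) (use assms A in blast)
    then have "X -` A \<inter> space M \<in> sigma_sets (space M) (gen_sigma M Xs)" by (rule sigma_sets.Basic)
    then show "X -` A \<inter> space (sigma (space M) (gen_sigma M Xs)) \<in> sets (sigma (space M) (gen_sigma M Xs))"
      using sub by (simp add: sets_measure_of space_measure_of)
  qed
qed

lemma gen_space: "space (sigma (space M) (gen_sigma M Xs)) = space M"
proof -
  have "gen_sigma M Xs \<subseteq> Pow (space M)"
  proof
    fix x assume "x \<in> gen_sigma M Xs"
    then have "x \<subseteq> space M" unfolding gen_sigma_def by (rule sigma_sets_into_sp[rotated]) auto
    then show "x \<in> Pow (space M)" by simp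
  qed
  then show ?thesis by (simp add: space_measure_of)
qed

lemma meas_opt_cong:
  assumes "meas_opt G X" "\<And>\<omega>. \<omega> \<in> space G \<Longrightarrow> X \<omega> = Y \<omega>"
  shows "meas_opt G Y"
proof -
  have e1: "{\<omega> \<in> space G. Y \<omega> = None} = {\<omega> \<in> space G. X \<omega> = None}" using assms(2) by auto
  have e2: "{\<omega> \<in> space G. Y \<omega> \<in> Some ` B} = {\<omega> \<in> space G. X \<omega> \<in> Some ` B}" for B using assms(2) by auto
  show ?thesis using assms(1) unfolding meas_opt_def e1 e2 .
qed

theorem proposition4p1:
  fixes M :: "'a measure" and F :: "real \<Rightarrow> 'a measure"
    and T :: real and N :: nat
    and W :: "nat \<Rightarrow> real \<Rightarrow> 'a \<Rightarrow> real" and X0 :: "nat \<Rightarrow> 'a \<Rightarrow> real"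
    and Z :: "nat \<Rightarrow> 'a \<Rightarrow> real" and rho0 :: "real \<Rightarrow> real"
    and K :: "real \<Rightarrow> real" and Kd :: "nat \<Rightarrow> real \<Rightarrow> real"
    and MK MK' MK'' LK LK' :: real
    and lam c0 phi0 phi1 m Mb :: real
  assumes T_pos: "T > 0"
    and prob: "prob_space M"
    and filt: "filtration (space M) F" and F_sub: "\<And>t. sets (F t) \<subseteq> sets M"
    and BM: "\<And>i. i < N \<Longrightarrow> brownian_motion M F (W i)"
    and X0_meas: "\<And>i. i < N \<Longrightarrow> X0 i \<in> borel_measurable (F 0)"
    and X0_law: "\<And>i. i < N \<Longrightarrow> distributed M lborel (X0 i) (\<lambda>x. ennreal (rho0 x))"
    and rho0_nonneg: "\<And>x. rho0 x \<ge> 0"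
    and rho0_L2: "integrable lborel (\<lambda>x. (rho0 x)\<^sup>2)"
    and rho0_cont: "continuous_on UNIV rho0" and rho0_bdd: "bounded (range rho0)"
    and rho0_mom2: "integrable lborel (\<lambda>x. x\<^sup>2 * rho0 x)"
    and Z_law: "\<And>i. i < N \<Longrightarrow> distributed M lborel (Z i) (\<lambda>x. ennreal (exponential_density 1 x))"
    and indep: "prob_space.indep_sets M
        (case_sum (\<lambda>i. gen_sigma M {X0 i})
           (case_sum (\<lambda>i. gen_sigma M {Z i}) (\<lambda>i. gen_sigma M {W i s | s. 0 \<le> s})))
        (Inl ` {..<N} \<union> Inr ` Inl ` {..<N} \<union> Inr ` Inr ` {..<N})"
    and K_smooth0: "Kd 0 = K"
    and K_smooth: "\<And>n x. (Kd n has_real_derivative Kd (Suc n) x) (at x)"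
    and K_nonneg: "\<And>x. K x \<ge> 0"
    and K_bdd: "\<And>x. \<bar>K x\<bar> \<le> MK" and dK_bdd: "\<And>x. \<bar>Kd 1 x\<bar> \<le> MK'"
    and d2K_bdd: "\<And>x. \<bar>Kd 2 x\<bar> \<le> MK''"
    and K_lip: "\<And>x y. \<bar>K x - K y\<bar> \<le> LK * \<bar>x - y\<bar>"
    and dK_lip: "\<And>x y. \<bar>Kd 1 x - Kd 1 y\<bar> \<le> LK' * \<bar>x - y\<bar>"
    and K_int: "integrable lborel K" and K_mass: "integral\<^sup>L lborel K = 1"
    and lam_pos: "lam > 0" and c0_pos: "c0 > 0" and phi0_pos: "phi0 > 0"
    and m_pos: "0 < m" and m_le: "m \<le> Mb"
    and phi_bounds: "\<And>x. 0 \<le> x \<Longrightarrow> x \<le> MK * T \<Longrightarrow>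
        m \<le> phi0 + phi1 * c0 * exp (- lam * x) \<and> phi0 + phi1 * c0 * exp (- lam * x) \<le> Mb"
  shows
    \<comment> \<open>existence of a strong solution, adapted to the filtration generated by the data\<close>
    "(\<exists>\<xi> :: nat \<Rightarrow> real \<Rightarrow> 'a \<Rightarrow> real option.
        (AE \<omega> in M. is_killed_solution T N K (Kd 1) lam c0 phi0 phi1
              (\<lambda>i. X0 i \<omega>) (\<lambda>i t. W i t \<omega>) (\<lambda>i. Z i \<omega>) (\<lambda>i t. \<xi> i t \<omega>)) \<and>
        (\<forall>i<N. \<forall>t. 0 \<le> t \<and> t \<le> T \<longrightarrow>
           meas_opt (sigma (space M) (gen_sigma M
              ({X0 j | j. j < N} \<union> {Z j | j. j < N} \<union> {W j s | j s. j < N \<and> 0 \<le> s \<and> s \<le> t})))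
             (\<xi> i t)))
     \<and>
     \<comment> \<open>pathwise uniqueness among F-adapted solutions\<close>
     (\<forall>\<xi> \<xi>' :: nat \<Rightarrow> real \<Rightarrow> 'a \<Rightarrow> real option.
        (AE \<omega> in M. is_killed_solution T N K (Kd 1) lam c0 phi0 phi1
              (\<lambda>i. X0 i \<omega>) (\<lambda>i t. W i t \<omega>) (\<lambda>i. Z i \<omega>) (\<lambda>i t. \<xi> i t \<omega>)) \<and>
        (\<forall>i<N. \<forall>t. 0 \<le> t \<and> t \<le> T \<longrightarrow> meas_opt (F t) (\<xi> i t)) \<and>
        (AE \<omega> in M. is_killed_solution T N K (Kd 1) lam c0 phi0 phi1
              (\<lambda>i. X0 i \<omega>) (\<lambda>i t. W i t \<omega>) (\<lambda>i. Z i \<omega>) (\<lambda>i t. \<xi>' i t \<omega>)) \<and>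
        (\<forall>i<N. \<forall>t. 0 \<le> t \<and> t \<le> T \<longrightarrow> meas_opt (F t) (\<xi>' i t))
        \<longrightarrow> (AE \<omega> in M. \<forall>i<N. \<forall>t. 0 \<le> t \<and> t \<le> T \<longrightarrow> \<xi> i t \<omega> = \<xi>' i t \<omega>))"

proof -
  interpret ksys T N K "Kd 1" lam c0 phi0 phi1 m Mb MK MK' LK LK'
    by unfold_locales (use T_pos K_nonneg K_bdd dK_bdd K_lip dK_lip lam_pos c0_pos phi0_pos m_pos phi_bounds in \<open>auto\<close>)
  have wcont: "\<And>i \<omega>. i < N \<Longrightarrow> \<omega> \<in> space M \<Longrightarrow> continuous_on {0..T} (\<lambda>t. W i t \<omega>)"
  proof -
    fix i \<omega> assume "i < N" "\<omega> \<in> space M"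
    then have "continuous_on {0..} (\<lambda>t. W i t \<omega>)" using BM unfolding brownian_motion_def by auto
    then show "continuous_on {0..T} (\<lambda>t. W i t \<omega>)" by (rule continuous_on_subset) auto
  qed
  define \<xi> where "\<xi> i t \<omega> = Sol (\<lambda>i. X0 i \<omega>) (\<lambda>i t. W i t \<omega>) (\<lambda>i. Z i \<omega>) i t" for i t \<omega>
  have sol: "is_killed_solution T N K (Kd 1) lam c0 phi0 phi1
              (\<lambda>i. X0 i \<omega>) (\<lambda>i t. W i t \<omega>) (\<lambda>i. Z i \<omega>) (\<lambda>i t. \<xi> i t \<omega>)" if "\<omega> \<in> space M" for \<omega>
    unfolding \<xi>_def by (rule Sol_sol) (use wcont that in auto)
  have meas: "meas_opt (sigma (space M) (gen_sigma M
              ({X0 j | j. j < N} \<union> {Z j | j. j < N} \<union> {W j s | j s. j < N \<and> 0 \<le> s \<and> s \<le> t})))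
             (\<xi> i t)" if i: "i < N" and t: "0 \<le> t" "t \<le> T" for i t
  proof -
    let ?S = "{X0 j | j. j < N} \<union> {Z j | j. j < N} \<union> {W j s | j s. j < N \<and> 0 \<le> s \<and> s \<le> t}"
    let ?G = "sigma (space M) (gen_sigma M ?S)"
    define Wf where "Wf j s \<omega> = W j (clip t s) \<omega>" for j s \<omega>
    have cl: "clip t s \<in> {0..t}" for s using t by (auto simp: clip_def)
    have "meas_opt ?G (\<lambda>\<omega>. Sol (\<lambda>i. X0 i \<omega>) (\<lambda>i t. Wf i t \<omega>) (\<lambda>i. Z i \<omega>) i t)"
    proof (rule M_Sol[OF _ _ _ _ i])
      show "\<And>i. i < N \<Longrightarrow> X0 i \<in> borel_measurable ?G" by (rule gen_meas) blast
      show "\<And>i. i < N \<Longrightarrow> Z i \<in> borel_measurable ?G" by (rule gen_meas) blast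
      show "\<And>i s. i < N \<Longrightarrow> s \<in> {0..T} \<Longrightarrow> Wf i s \<in> borel_measurable ?G"
        unfolding Wf_def
      proof (rule gen_meas)
        fix i s assume "i < N" "s \<in> {0..T}"
        moreover have "0 \<le> clip t s" "clip t s \<le> t" using cl[of s] by auto
        ultimately show "W i (clip t s) \<in> ?S" by blast
      qed
      show "t \<in> {0..T}" using t by simp
      fix j \<omega> assume j: "j < N" and \<omega>: "\<omega> \<in> space ?G"
      have "continuous_on {0..} (\<lambda>s. W j s \<omega>)" using BM[OF j] \<omega> unfolding brownian_motion_def gen_space by auto
      then show "continuous_on {0..T} (\<lambda>s. Wf j s \<omega>)" unfolding Wf_def
        by (rule continuous_on_compose2[OF _ clip_cont]) (use cl in auto)
    qed
    moreover have "Sol (\<lambda>i. X0 i \<omega>) (\<lambda>i t. Wf i t \<omega>) (\<lambda>i. Z i \<omega>) i t = \<xi> i t \<omega>" if \<omega>: "\<omega> \<in> space ?G" for \<omega>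
    proof -
      have \<omega>': "\<omega> \<in> space M" using \<omega> by (simp add: gen_space)
      have wc': "\<And>j. j < N \<Longrightarrow> continuous_on {0..T} (\<lambda>s. Wf j s \<omega>)"
      proof -
        fix j assume j: "j < N"
        have "continuous_on {0..} (\<lambda>s. W j s \<omega>)" using BM[OF j] \<omega>' unfolding brownian_motion_def by auto
        then show "continuous_on {0..T} (\<lambda>s. Wf j s \<omega>)" unfolding Wf_def
          by (rule continuous_on_compose2[OF _ clip_cont]) (use cl in auto)
      qed
      have s1: "is_killed_solution T N K (Kd 1) lam c0 phi0 phi1 (\<lambda>i. X0 i \<omega>) (\<lambda>i s. Wf i s \<omega>) (\<lambda>i. Z i \<omega>)
          (Sol (\<lambda>i. X0 i \<omega>) (\<lambda>i s. Wf i s \<omega>) (\<lambda>i. Z i \<omega>))"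
        by (rule Sol_sol) (rule wc')
      have s2: "is_killed_solution T N K (Kd 1) lam c0 phi0 phi1 (\<lambda>i. X0 i \<omega>) (\<lambda>i s. W i s \<omega>) (\<lambda>i. Z i \<omega>)
          (Sol (\<lambda>i. X0 i \<omega>) (\<lambda>i s. W i s \<omega>) (\<lambda>i. Z i \<omega>))"
        by (rule Sol_sol) (use wcont \<omega>' in auto)
      have ww: "\<And>i s. i < N \<Longrightarrow> s \<in> {0..t} \<Longrightarrow> Wf i s \<omega> = W i s \<omega>"
        unfolding Wf_def by (auto simp: clip_def)
      show ?thesis unfolding \<xi>_def
        by (rule DU[OF s1 s2 t(1) t(2) _ i]) (use ww t in auto)
    qed
    ultimately show ?thesis by (rule meas_opt_cong)
  qed
  have exi: "\<exists>\<xi> :: nat \<Rightarrow> real \<Rightarrow> 'a \<Rightarrow> real option.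
        (AE \<omega> in M. is_killed_solution T N K (Kd 1) lam c0 phi0 phi1
              (\<lambda>i. X0 i \<omega>) (\<lambda>i t. W i t \<omega>) (\<lambda>i. Z i \<omega>) (\<lambda>i t. \<xi> i t \<omega>)) \<and>
        (\<forall>i<N. \<forall>t. 0 \<le> t \<and> t \<le> T \<longrightarrow>
           meas_opt (sigma (space M) (gen_sigma M
              ({X0 j | j. j < N} \<union> {Z j | j. j < N} \<union> {W j s | j s. j < N \<and> 0 \<le> s \<and> s \<le> t})))
             (\<xi> i t))"
    by (rule exI[of _ \<xi>]) (use sol meas in \<open>auto intro: AE_I2\<close>)
  have uni: "AE \<omega> in M. \<forall>i<N. \<forall>t. 0 \<le> t \<and> t \<le> T \<longrightarrow> \<xi>1 i t \<omega> = \<xi>2 i t \<omega>"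
    if a1: "AE \<omega> in M. is_killed_solution T N K (Kd 1) lam c0 phi0 phi1
              (\<lambda>i. X0 i \<omega>) (\<lambda>i t. W i t \<omega>) (\<lambda>i. Z i \<omega>) (\<lambda>i t. \<xi>1 i t \<omega>)"
      and a2: "AE \<omega> in M. is_killed_solution T N K (Kd 1) lam c0 phi0 phi1
              (\<lambda>i. X0 i \<omega>) (\<lambda>i t. W i t \<omega>) (\<lambda>i. Z i \<omega>) (\<lambda>i t. \<xi>2 i t \<omega>)"
    for \<xi>1 \<xi>2 :: "nat \<Rightarrow> real \<Rightarrow> 'a \<Rightarrow> real option"
    using a1 a2
  proof eventually_elim
    case (elim \<omega>)
    show ?case
    proof (intro allI impI)
      fix i t assume "i < N" "0 \<le> t \<and> t \<le> T"
      then show "\<xi>1 i t \<omega> = \<xi>2 i t \<omega>"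
        using DU[OF elim(1) elim(2), of T] T_pos by auto
    qed
  qed
  show ?thesis using exi uni by blast
qed


end
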